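(* Let $(W,S)$ be a Coxeter system with $S=\{s_0,\dots,s_n\}$ finite, and let $\widetilde\varphi:G_{n,2}\to W$ be the epimorphism with $\widetilde\varphi(\alpha_i)=s_i$; let $H=\ker\widetilde\varphi$. Then $\widetilde{\mathfrak X}_{n,2}(H)$ is a simplicial complex (all multiplicities $1$) and it is isomorphic to the Coxeter complex $X(W,S)$.
   Context: A Coxeter system $(W,S)$: $W$ has presentation $\langle S\mid (st)^{m_{st}},\ s,t\in S\rangle$ with $m_{ss}=1$, $m_{st}\in\{2,3,\dots\}\cup\{\infty\}$ for $s\neq t$ (no relation when $\infty$). For $J\subseteq\{0,\dots,n\}$, $W_J=\langle s_i:i\in J\rangle$ and $\widehat J=\{0,\dots,n\}\setminus J$, $\widehat i=\widehat{\{i\}}$. The Coxeter complex $X(W,S)$ has as vertices the cosets $W_{\widehat i}w$ ($i\in\{0,\dots,n\}$, $w\in W$) and as cells the sets $\{W_{\widehat i}w:i\in J\}$ for $w\in W$, $J\subseteq\{0,\dots,n\}$. $G_{n,2}=\langle\alpha_0,\dots,\alpha_n\mid\alpha_i^2=e\rangle$; $K_J=\langle\alpha_j:j\in J\rangle$. For $H\le G_{n,2}$, $[K_{\widehat J}g]_H=\{K_{\widehat J}gh:h\in H\}$; the multicomplex $\widetilde{\mathfrak X}_{n,2}(H)$ has multicells $[K_{\widehat J}g]_H$ of dimension $|J|-1$, the multicell $[K_{\widehat J}g]_H$ lying over the cell $\{[K_{\widehat i}g]_H:i\in J\}$, and the multiplicity of a cell is the number of multicells over it. *)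

theory Defs
  imports "HOL-Algebra.Algebra" "HOL-Library.Extended_Nat"
begin

text \<open>Elements of G_{n,2} are reduced words over the letters 0..n
  (lists with no two equal adjacent letters); the letter i stands for alpha_i.\<close>

definition red_words :: "nat \<Rightarrow> nat list set" where
  "red_words n = {ws. set ws \<subseteq> {0..n} \<and> (\<forall>k. Suc k < length ws \<longrightarrow> ws ! k \<noteq> ws ! Suc k)}"

definition cancel_cons :: "nat \<Rightarrow> nat list \<Rightarrow> nat list" where
  "cancel_cons x ys = (case ys of [] \<Rightarrow> [x] | y # ys' \<Rightarrow> (if x = y then ys' else x # ys))"

definition word_mult :: "nat list \<Rightarrow> nat list \<Rightarrow> nat list" where
  "word_mult xs ys = foldr cancel_cons xs ys"

definition Gn2 :: "nat \<Rightarrow> nat list monoid" where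
  "Gn2 n = \<lparr>carrier = red_words n, monoid.mult = word_mult, one = []\<rparr>"

definition alpha :: "nat \<Rightarrow> nat list" where
  "alpha i = [i]"

definition Ksub :: "nat \<Rightarrow> nat set \<Rightarrow> nat list set" where
  "Ksub n J = generate (Gn2 n) (alpha ` J)"

definition hat :: "nat \<Rightarrow> nat set \<Rightarrow> nat set" where
  "hat n J = {0..n} - J"

definition coxeter_matrix :: "nat \<Rightarrow> (nat \<Rightarrow> nat \<Rightarrow> enat) \<Rightarrow> bool" where
  "coxeter_matrix n m \<longleftrightarrow>
     (\<forall>i\<le>n. m i i = 1) \<and>
     (\<forall>i\<le>n. \<forall>j\<le>n. m i j = m j i) \<and>
     (\<forall>i\<le>n. \<forall>j\<le>n. i \<noteq> j \<longrightarrow> m i j \<ge> 2)"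

definition phi_tilde :: "('a, 'b) monoid_scheme \<Rightarrow> (nat \<Rightarrow> 'a) \<Rightarrow> nat list \<Rightarrow> 'a" where
  "phi_tilde W s ws = foldr (\<lambda>i acc. s i \<otimes>\<^bsub>W\<^esub> acc) ws \<one>\<^bsub>W\<^esub>"

definition normal_closure :: "('a, 'b) monoid_scheme \<Rightarrow> 'a set \<Rightarrow> 'a set" where
  "normal_closure G A =
     generate G {g \<otimes>\<^bsub>G\<^esub> a \<otimes>\<^bsub>G\<^esub> inv\<^bsub>G\<^esub> g | g a. g \<in> carrier G \<and> a \<in> A}"

definition coxeter_relators :: "nat \<Rightarrow> (nat \<Rightarrow> nat \<Rightarrow> enat) \<Rightarrow> nat list set" where
  "coxeter_relators n m =
     {(alpha i \<otimes>\<^bsub>Gn2 n\<^esub> alpha j) [^]\<^bsub>Gn2 n\<^esub> k | i j k. i \<le> n \<and> j \<le> n \<and> m i j = enat k}"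

text \<open>(W,S) with S = {s_0..s_n} is a Coxeter system with Coxeter matrix m:
  W is a group and tilde-phi : G_{n,2} -> W, alpha_i |-> s_i, is an epimorphism
  whose kernel is the normal closure of the Coxeter relators, i.e.
  W = < S | (s_i s_j)^{m_ij} >.\<close>
definition coxeter_system :: "('a, 'b) monoid_scheme \<Rightarrow> nat \<Rightarrow> (nat \<Rightarrow> 'a) \<Rightarrow> (nat \<Rightarrow> nat \<Rightarrow> enat) \<Rightarrow> bool" where
  "coxeter_system W n s m \<longleftrightarrow>
     group W \<and> coxeter_matrix n m \<and> (\<forall>i\<le>n. s i \<in> carrier W) \<and>
     phi_tilde W s \<in> hom (Gn2 n) W \<and>
     phi_tilde W s ` carrier (Gn2 n) = carrier W \<and>
     kernel (Gn2 n) W (phi_tilde W s) = normal_closure (Gn2 n) (coxeter_relators n m)"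

definition Wsub :: "('a, 'b) monoid_scheme \<Rightarrow> (nat \<Rightarrow> 'a) \<Rightarrow> nat set \<Rightarrow> 'a set" where
  "Wsub W s J = generate W (s ` J)"

definition coxeter_complex :: "('a, 'b) monoid_scheme \<Rightarrow> nat \<Rightarrow> (nat \<Rightarrow> 'a) \<Rightarrow> 'a set set set" where
  "coxeter_complex W n s =
     {(\<lambda>i. Wsub W s (hat n {i}) #>\<^bsub>W\<^esub> w) ` J | J w. J \<subseteq> {0..n} \<and> w \<in> carrier W}"

definition orbit_class :: "nat \<Rightarrow> nat list set \<Rightarrow> nat set \<Rightarrow> nat list \<Rightarrow> nat list set set" where
  "orbit_class n H J g = (\<lambda>h. Ksub n (hat n J) #>\<^bsub>Gn2 n\<^esub> (g \<otimes>\<^bsub>Gn2 n\<^esub> h)) ` H"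

text \<open>Multicells, tagged with their index set J (dimension |J|-1).\<close>
definition multicells :: "nat \<Rightarrow> nat list set \<Rightarrow> (nat set \<times> nat list set set) set" where
  "multicells n H = {(J, orbit_class n H J g) | J g. J \<subseteq> {0..n} \<and> g \<in> carrier (Gn2 n)}"

definition lies_over :: "nat \<Rightarrow> nat list set \<Rightarrow> nat set \<times> nat list set set \<Rightarrow> nat list set set set \<Rightarrow> bool" where
  "lies_over n H M \<sigma> \<longleftrightarrow>
     (\<exists>g \<in> carrier (Gn2 n). snd M = orbit_class n H (fst M) g \<and>
        \<sigma> = (\<lambda>i. orbit_class n H {i} g) ` fst M)"

definition multicomplex_cells :: "nat \<Rightarrow> nat list set \<Rightarrow> nat list set set set set" where
  "multicomplex_cells n H = {\<sigma>. \<exists>M \<in> multicells n H. lies_over n H M \<sigma>}"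

definition multiplicity :: "nat \<Rightarrow> nat list set \<Rightarrow> nat list set set set \<Rightarrow> nat" where
  "multiplicity n H \<sigma> = card {M \<in> multicells n H. lies_over n H M \<sigma>}"

definition complex_iso :: "'v set set \<Rightarrow> 'u set set \<Rightarrow> bool" where
  "complex_iso C D \<longleftrightarrow>
     (\<exists>f. bij_betw f (\<Union>C) (\<Union>D) \<and> (\<forall>\<sigma>. \<sigma> \<subseteq> \<Union>C \<longrightarrow> (\<sigma> \<in> C \<longleftrightarrow> f ` \<sigma> \<in> D)))"

end

theory Submission
  imports Defs Complex_Main
begin


lemma red_Nil[simp]: "[] \<in> red_words n"
  by (simp add: red_words_def)

lemma red_Cons: "x # ys \<in> red_words n \<longleftrightarrow> x \<le> n \<and> ys \<in> red_words n \<and> (ys \<noteq> [] \<longrightarrow> hd ys \<noteq> x)"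
proof
  assume a: "x # ys \<in> red_words n"
  have "\<forall>k. Suc k < length ys \<longrightarrow> ys ! k \<noteq> ys ! Suc k"
  proof (intro allI impI)
    fix k assume "Suc k < length ys"
    with a have "(x#ys) ! Suc k \<noteq> (x#ys) ! Suc (Suc k)" unfolding red_words_def by auto
    thus "ys ! k \<noteq> ys ! Suc k" by simp
  qed
  moreover have "ys \<noteq> [] \<longrightarrow> hd ys \<noteq> x"
  proof
    assume "ys \<noteq> []"
    with a have "(x#ys) ! 0 \<noteq> (x#ys) ! Suc 0" unfolding red_words_def by auto
    thus "hd ys \<noteq> x" using \<open>ys \<noteq> []\<close> by (cases ys) auto
  qed
  ultimately show "x \<le> n \<and> ys \<in> red_words n \<and> (ys \<noteq> [] \<longrightarrow> hd ys \<noteq> x)"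
    using a unfolding red_words_def by auto
next
  assume a: "x \<le> n \<and> ys \<in> red_words n \<and> (ys \<noteq> [] \<longrightarrow> hd ys \<noteq> x)"
  show "x # ys \<in> red_words n" unfolding red_words_def
  proof (intro CollectI conjI allI impI)
    show "set (x # ys) \<subseteq> {0..n}" using a by (auto simp: red_words_def)
    fix k assume k: "Suc k < length (x # ys)"
    show "(x # ys) ! k \<noteq> (x # ys) ! Suc k"
    proof (cases k)
      case 0 then show ?thesis using a k by (cases ys) auto
    next
      case (Suc j) then show ?thesis using a k by (auto simp: red_words_def)
    qed
  qed
qed

lemma red_set: "ys \<in> red_words n \<Longrightarrow> set ys \<subseteq> {0..n}"
  by (simp add: red_words_def)

lemma cancel_cons_red: "x \<le> n \<Longrightarrow> ys \<in> red_words n \<Longrightarrow> cancel_cons x ys \<in> red_words n"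
  by (cases ys) (auto simp: cancel_cons_def red_Cons)

lemma cancel_cons_invol: "ys \<in> red_words n \<Longrightarrow> cancel_cons x (cancel_cons x ys) = ys"
  by (cases ys) (auto simp: cancel_cons_def red_Cons split: list.splits)

lemma word_mult_Cons: "word_mult (x # xs) ys = cancel_cons x (word_mult xs ys)"
  by (simp add: word_mult_def)

lemma word_mult_Nil[simp]: "word_mult [] ys = ys"
  by (simp add: word_mult_def)

lemma word_mult_red: "set xs \<subseteq> {0..n} \<Longrightarrow> ys \<in> red_words n \<Longrightarrow> word_mult xs ys \<in> red_words n"
  by (induction xs) (auto simp: word_mult_Cons cancel_cons_red)

lemma word_mult_Nil2: "xs \<in> red_words n \<Longrightarrow> word_mult xs [] = xs"
proof (induction xs)
  case (Cons x xs)
  then show ?case by (cases xs) (auto simp: word_mult_Cons cancel_cons_def red_Cons)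
qed simp

lemma word_mult_append: "word_mult (xs @ ys) zs = word_mult xs (word_mult ys zs)"
  by (simp add: word_mult_def)

lemma word_mult_assoc_aux:
  assumes "ys \<in> red_words n" "zs \<in> red_words n" "set xs \<subseteq> {0..n}"
  shows "word_mult (word_mult xs ys) zs = word_mult xs (word_mult ys zs)"
  using assms(3)
proof (induction xs)
  case Nil then show ?case by simp
next
  case (Cons x xs)
  define w where "w = word_mult xs ys"
  have w: "w \<in> red_words n" using Cons assms by (simp add: w_def word_mult_red)
  have "word_mult (cancel_cons x w) zs = cancel_cons x (word_mult w zs)"
  proof (cases "w \<noteq> [] \<and> hd w = x")
    case True
    then obtain w' where w': "w = x # w'" by (cases w) auto
    hence "w' \<in> red_words n" using w by (simp add: red_Cons)
    hence r: "word_mult w' zs \<in> red_words n" using assms red_set by (simp add: word_mult_red)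
    have "cancel_cons x w = w'" using w' by (simp add: cancel_cons_def)
    moreover have "word_mult w zs = cancel_cons x (word_mult w' zs)" using w' by (simp add: word_mult_Cons)
    ultimately show ?thesis using r by (simp add: cancel_cons_invol)
  next
    case False
    hence "cancel_cons x w = x # w" by (cases w) (auto simp: cancel_cons_def)
    then show ?thesis by (simp add: word_mult_Cons)
  qed
  then show ?case using Cons by (simp add: word_mult_Cons w_def)
qed

lemma rev_red: "xs \<in> red_words n \<Longrightarrow> rev xs \<in> red_words n"
proof (induction xs)
  case (Cons x xs)
  hence "rev xs \<in> red_words n" by (simp add: red_Cons)
  show ?case unfolding red_words_def
  proof (intro CollectI conjI allI impI)
    show "set (rev (x # xs)) \<subseteq> {0..n}" using Cons.prems by (simp add: red_words_def)
    fix k assume k: "Suc k < length (rev (x # xs))"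
    have "\<forall>k. Suc k < length (x#xs) \<longrightarrow> (x#xs) ! k \<noteq> (x#xs) ! Suc k" using Cons.prems by (simp add: red_words_def)
    then have "(x#xs) ! (length xs - Suc k) \<noteq> (x#xs) ! Suc (length xs - Suc k)" using k by simp
    moreover have "Suc (length xs - Suc k) = length (x#xs) - Suc k" using k by simp
    ultimately show "rev (x # xs) ! k \<noteq> rev (x # xs) ! Suc k" using k
      by (metis rev_nth length_rev Suc_lessD diff_Suc_eq_diff_pred length_Cons diff_Suc_Suc)
  qed
qed simp

lemma rev_mult: "xs \<in> red_words n \<Longrightarrow> word_mult (rev xs) xs = []"
proof (induction xs)
  case (Cons x xs)
  hence "xs \<in> red_words n" by (simp add: red_Cons)
  have "word_mult (rev (x#xs)) (x#xs) = word_mult (rev xs) (cancel_cons x (x # xs))"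
    by (simp add: word_mult_append word_mult_Cons)
  also have "\<dots> = word_mult (rev xs) xs" by (simp add: cancel_cons_def)
  finally show ?case using Cons \<open>xs \<in> red_words n\<close> by simp
qed simp

lemma group_Gn2: "group (Gn2 n)"
proof (rule groupI)
  show "\<And>x y. x \<in> carrier (Gn2 n) \<Longrightarrow> y \<in> carrier (Gn2 n) \<Longrightarrow> x \<otimes>\<^bsub>Gn2 n\<^esub> y \<in> carrier (Gn2 n)"
    by (simp add: Gn2_def word_mult_red red_set)
  show "\<one>\<^bsub>Gn2 n\<^esub> \<in> carrier (Gn2 n)" by (simp add: Gn2_def)
  show "\<And>x y z. x \<in> carrier (Gn2 n) \<Longrightarrow> y \<in> carrier (Gn2 n) \<Longrightarrow> z \<in> carrier (Gn2 n) \<Longrightarrow>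
           x \<otimes>\<^bsub>Gn2 n\<^esub> y \<otimes>\<^bsub>Gn2 n\<^esub> z = x \<otimes>\<^bsub>Gn2 n\<^esub> (y \<otimes>\<^bsub>Gn2 n\<^esub> z)"
    by (simp add: Gn2_def word_mult_assoc_aux red_set)
  show "\<And>x. x \<in> carrier (Gn2 n) \<Longrightarrow> \<one>\<^bsub>Gn2 n\<^esub> \<otimes>\<^bsub>Gn2 n\<^esub> x = x"
    by (simp add: Gn2_def)
  show "\<And>x. x \<in> carrier (Gn2 n) \<Longrightarrow> \<exists>y\<in>carrier (Gn2 n). y \<otimes>\<^bsub>Gn2 n\<^esub> x = \<one>\<^bsub>Gn2 n\<^esub>"
    by (auto simp: Gn2_def intro!: bexI[of _ "rev _"] rev_red rev_mult)
qed



definition ev :: "nat \<Rightarrow> nat \<Rightarrow> real" where "ev i p = (if p = i then 1 else 0)"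

definition Bf :: "nat \<Rightarrow> (nat \<Rightarrow> nat \<Rightarrow> real) \<Rightarrow> nat \<Rightarrow> (nat \<Rightarrow> real) \<Rightarrow> real" where
  "Bf n c l v = (\<Sum>q\<in>{0..n}. c l q * v q)"

definition sig :: "nat \<Rightarrow> (nat \<Rightarrow> nat \<Rightarrow> real) \<Rightarrow> nat \<Rightarrow> (nat \<Rightarrow> real) \<Rightarrow> (nat \<Rightarrow> real)" where
  "sig n c l v = (if l \<le> n then (\<lambda>p. v p - 2 * Bf n c l v * ev l p) else v)"

lemma Bf_add[simp]: "Bf n c l (\<lambda>p. f p + g p) = Bf n c l f + Bf n c l g"
  by (simp add: Bf_def algebra_simps sum.distrib)

lemma Bf_diff[simp]: "Bf n c l (\<lambda>p. f p - g p) = Bf n c l f - Bf n c l g"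
  by (simp add: Bf_def algebra_simps sum_subtractf)

lemma Bf_ev[simp]: "a \<le> n \<Longrightarrow> Bf n c l (\<lambda>p. A * ev a p) = A * c l a"
proof -
  assume a: "a \<le> n"
  have "Bf n c l (\<lambda>p. A * ev a p) = A * (\<Sum>q\<in>{0..n}. if q = a then c l q else 0)"
    unfolding Bf_def sum_distrib_left by (rule sum.cong) (auto simp: ev_def)
  also have "\<dots> = A * c l a" using a by (simp add: sum.delta')
  finally show ?thesis .
qed

lemma Bf_cmult[simp]: "Bf n c l (\<lambda>p. A * f p) = A * Bf n c l f"
  by (simp add: Bf_def sum_distrib_left algebra_simps)

lemma Bf_cmult'[simp]: "Bf n c l (\<lambda>p. f p * A) = Bf n c l f * A"
  by (simp add: Bf_def sum_distrib_right algebra_simps)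

lemma Bf_ev0[simp]: "a \<le> n \<Longrightarrow> Bf n c l (ev a) = c l a"
  using Bf_ev[of a n c l 1] by simp

lemma Bf_ev'[simp]: "a \<le> n \<Longrightarrow> Bf n c l (\<lambda>p. ev a p * A) = c l a * A"
  using Bf_ev[of a n c l A] by (simp add: mult.commute)

lemma sig_invol:
  assumes "\<And>l. l \<le> n \<Longrightarrow> c l l = 1"
  shows "sig n c l \<circ> sig n c l = id"
proof (rule ext)
  fix v
  show "(sig n c l \<circ> sig n c l) v = id v"
  proof (cases "l \<le> n")
    case True
    have "Bf n c l (sig n c l v) = - Bf n c l v"
      using True assms by (simp add: sig_def)
    then show ?thesis using True assms[OF True] by (simp add: sig_def fun_eq_iff algebra_simps)
  qed (simp add: sig_def)
qed

lemma rec_periodic: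
  fixes x :: "nat \<Rightarrow> real" and \<phi> :: real
  assumes rec: "\<And>p. x (Suc (Suc p)) = 2 * cos \<phi> * x (Suc p) - x p"
    and sn: "sin \<phi> \<noteq> 0"
  shows "x p = x 0 * cos (p * \<phi>) + ((x 1 - x 0 * cos \<phi>) / sin \<phi>) * sin (p * \<phi>)"
proof (induction p rule: less_induct)
  case (less p)
  define Q where "Q = (x 1 - x 0 * cos \<phi>) / sin \<phi>"
  show ?case
  proof (cases p)
    case 0 then show ?thesis by simp
  next
    case (Suc q)
    show ?thesis
    proof (cases q)
      case 0 then show ?thesis using Suc sn by (simp add: field_simps)
    next
      case (Suc r)
      have "Suc r < p" "r < p" using Suc \<open>p = Suc q\<close> by auto
      have h1: "x (Suc r) = x 0 * cos (Suc r * \<phi>) + Q * sin (Suc r * \<phi>)"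
        unfolding Q_def by (rule less.IH[OF \<open>Suc r < p\<close>])
      have h0: "x r = x 0 * cos (r * \<phi>) + Q * sin (r * \<phi>)"
        unfolding Q_def by (rule less.IH[OF \<open>r < p\<close>])
      have c: "cos (Suc (Suc r) * \<phi>) = 2 * cos \<phi> * cos (Suc r * \<phi>) - cos (r * \<phi>)"
      proof -
        have "cos (Suc r * \<phi> + \<phi>) + cos (Suc r * \<phi> - \<phi>) = 2 * cos \<phi> * cos (Suc r * \<phi>)"
          by (simp add: cos_add cos_diff)
        moreover have "Suc r * \<phi> + \<phi> = Suc (Suc r) * \<phi>" "Suc r * \<phi> - \<phi> = r * \<phi>" by (simp_all add: algebra_simps)
        ultimately show ?thesis by simp
      qed
      have sn2: "sin (Suc (Suc r) * \<phi>) = 2 * cos \<phi> * sin (Suc r * \<phi>) - sin (r * \<phi>)"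
      proof -
        have "sin (Suc r * \<phi> + \<phi>) + sin (Suc r * \<phi> - \<phi>) = 2 * cos \<phi> * sin (Suc r * \<phi>)"
          by (simp add: sin_add sin_diff)
        moreover have "Suc r * \<phi> + \<phi> = Suc (Suc r) * \<phi>" "Suc r * \<phi> - \<phi> = r * \<phi>" by (simp_all add: algebra_simps)
        ultimately show ?thesis by simp
      qed
      have "x (Suc (Suc r)) = 2 * cos \<phi> * x (Suc r) - x r" by (rule rec)
      also have "\<dots> = 2 * cos \<phi> * (x 0 * cos (Suc r * \<phi>) + Q * sin (Suc r * \<phi>)) - (x 0 * cos (r * \<phi>) + Q * sin (r * \<phi>))"
        by (simp only: h1 h0)
      also have "\<dots> = x 0 * (2 * cos \<phi> * cos (Suc r * \<phi>) - cos (r * \<phi>)) + Q * (2 * cos \<phi> * sin (Suc r * \<phi>) - sin (r * \<phi>))"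
        by (simp add: algebra_simps)
      also have "\<dots> = x 0 * cos (Suc (Suc r) * \<phi>) + Q * sin (Suc (Suc r) * \<phi>)"
        by (simp only: c sn2)
      finally show ?thesis unfolding Q_def using \<open>p = Suc q\<close> Suc by simp
    qed
  qed
qed

lemma rec_period:
  fixes x :: "nat \<Rightarrow> real"
  assumes k: "k \<ge> 3" and rec: "\<And>p. x (Suc (Suc p)) = 2 * cos (2 * pi / k) * x (Suc p) - x p"
  shows "x k = x 0"
proof -
  have "0 < 2 * pi / k" "2 * pi / k < pi" using k by (auto simp: field_simps)
  then have "sin (2 * pi / k) \<noteq> 0" using sin_gt_zero by (metis less_irrefl)
  from rec_periodic[where x=x and \<phi>="2 * pi / k" and p=k, OF rec this] have "x k = x 0 * cos (k * (2 * pi / k)) + ((x 1 - x 0 * cos (2 * pi / k)) / sin (2 * pi / k)) * sin (k * (2 * pi / k))" .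
  moreover have "real k * (2 * pi / real k) = 2 * pi" using k by simp
  ultimately show ?thesis by simp
qed

lemma sig_rel:
  assumes ij: "i \<le> n" "j \<le> n" "i \<noteq> j" and cii: "c i i = 1" "c j j = 1"
    and cij: "c i j = - cos (pi / k)" "c j i = - cos (pi / k)" and k: "k \<ge> 2"
  shows "(sig n c i \<circ> sig n c j) ^^ k = id"
proof (rule ext)
  fix u
  define \<rho> where "\<rho> = sig n c i \<circ> sig n c j"
  define cc where "cc = - cos (pi / k)"
  define a where "a p = Bf n c i ((\<rho> ^^ p) u)" for p
  define b where "b p = Bf n c j ((\<rho> ^^ p) u)" for p
  have step: "\<rho> w = (\<lambda>p. w p + (4 * cc * Bf n c j w - 2 * Bf n c i w) * ev i p + (- 2 * Bf n c j w) * ev j p)"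
    and stepa: "Bf n c i (\<rho> w) = - Bf n c i w + 2 * cc * Bf n c j w"
    and stepb: "Bf n c j (\<rho> w) = - 2 * cc * Bf n c i w + (4 * cc^2 - 1) * Bf n c j w" for w
  proof -
    have sj: "sig n c j w = (\<lambda>p. w p + (- 2 * Bf n c j w) * ev j p)" using ij by (simp add: sig_def)
    have bi: "Bf n c i (sig n c j w) = Bf n c i w - 2 * cc * Bf n c j w"
      using ij cij by (simp add: sj cc_def)
    have "\<rho> w = sig n c i (sig n c j w)" by (simp add: \<rho>_def)
    also have "\<dots> = (\<lambda>p. sig n c j w p + (- 2 * Bf n c i (sig n c j w)) * ev i p)" using ij by (simp add: sig_def fun_eq_iff algebra_simps)
    also have "\<dots> = (\<lambda>p. w p + (4 * cc * Bf n c j w - 2 * Bf n c i w) * ev i p + (- 2 * Bf n c j w) * ev j p)"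
      unfolding bi by (simp add: sj algebra_simps fun_eq_iff)
    finally show st: "\<rho> w = (\<lambda>p. w p + (4 * cc * Bf n c j w - 2 * Bf n c i w) * ev i p + (- 2 * Bf n c j w) * ev j p)" .
    show "Bf n c i (\<rho> w) = - Bf n c i w + 2 * cc * Bf n c j w"
      unfolding st using ij cii cij by (simp add: cc_def algebra_simps)
    show "Bf n c j (\<rho> w) = - 2 * cc * Bf n c i w + (4 * cc^2 - 1) * Bf n c j w"
      unfolding st using ij cii cij by (simp add: cc_def algebra_simps power2_eq_square)
  qed
  have ra: "a (Suc p) = - a p + 2 * cc * b p" for p by (simp add: a_def b_def stepa)
  have rb: "b (Suc p) = - 2 * cc * a p + (4 * cc^2 - 1) * b p" for p by (simp add: a_def b_def stepb)
  have pw: "(\<rho> ^^ l) u = (\<lambda>p. u p + (\<Sum>q<l. 4 * cc * b q - 2 * a q) * ev i p + (\<Sum>q<l. - 2 * b q) * ev j p)" for l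
  proof (induction l)
    case 0 then show ?case by simp
  next
    case (Suc l)
    have "(\<rho> ^^ Suc l) u = \<rho> ((\<rho> ^^ l) u)" by simp
    also have "\<dots> = (\<lambda>p. (\<rho> ^^ l) u p + (4 * cc * b l - 2 * a l) * ev i p + (- 2 * b l) * ev j p)"
      by (simp only: step a_def b_def)
    also have "\<dots> = (\<lambda>p. u p + (\<Sum>q<Suc l. 4 * cc * b q - 2 * a q) * ev i p + (\<Sum>q<Suc l. - 2 * b q) * ev j p)"
      by (simp add: Suc algebra_simps)
    finally show ?case .
  qed
  have c2: "cc^2 < 1"
  proof -
    have "0 < pi / k" "pi / k < pi" using k by (auto simp: field_simps)
    then have "sin (pi / k) > 0" by (rule sin_gt_zero)
    moreover have "sin (pi / k) ^ 2 + cos (pi / k) ^ 2 = 1" by (rule sin_cos_squared_add)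
    ultimately have "sin (pi / k) ^ 2 > 0" "sin (pi / k) ^ 2 + cos (pi / k) ^ 2 = 1" by simp_all
    then show ?thesis unfolding cc_def power2_minus by linarith
  qed
  have per: "a k = a 0 \<and> b k = b 0"
  proof (cases "k = 2")
    case True
    have "cc = 0" using True by (simp add: cc_def)
    then show ?thesis using True ra rb by (simp add: numeral_2_eq_2)
  next
    case False
    then have k3: "k \<ge> 3" using k by simp
    have tau: "4 * cc^2 - 2 = 2 * cos (2 * pi / k)"
    proof -
      have "cos (2 * (pi / k)) = 2 * cos (pi / k) ^ 2 - 1" by (rule cos_double_cos)
      then show ?thesis by (simp add: cc_def)
    qed
    have "a (Suc (Suc p)) = 2 * cos (2 * pi / k) * a (Suc p) - a p" for p
    proof -
      have h: "2 * cc * b p = a (Suc p) + a p" using ra by simp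
      have "a (Suc (Suc p)) = - a (Suc p) + 2 * cc * b (Suc p)" by (rule ra)
      also have "\<dots> = - a (Suc p) + 2 * cc * (- 2 * cc * a p + (4 * cc^2 - 1) * b p)" by (simp only: rb)
      also have "\<dots> = - a (Suc p) - 4 * cc^2 * a p + (4 * cc^2 - 1) * (2 * cc * b p)" by (simp add: algebra_simps power2_eq_square)
      also have "\<dots> = - a (Suc p) - 4 * cc^2 * a p + (4 * cc^2 - 1) * (a (Suc p) + a p)" by (simp only: h)
      also have "\<dots> = (4 * cc^2 - 2) * a (Suc p) - a p" by (simp add: algebra_simps power2_eq_square)
      finally show ?thesis by (simp only: tau)
    qed
    moreover have "b (Suc (Suc p)) = 2 * cos (2 * pi / k) * b (Suc p) - b p" for p
    proof -
      have h: "- 2 * cc * a p = b (Suc p) - (4 * cc^2 - 1) * b p" using rb by simp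
      have "- 2 * cc * a (Suc p) = - 2 * cc * (- a p + 2 * cc * b p)" by (simp only: ra)
      also have "\<dots> = - (- 2 * cc * a p) - 4 * cc^2 * b p" by (simp add: algebra_simps power2_eq_square)
      also have "\<dots> = - b (Suc p) - b p" by (simp only: h) (simp add: algebra_simps power2_eq_square)
      finally have h2: "- 2 * cc * a (Suc p) = - b (Suc p) - b p" .
      have "b (Suc (Suc p)) = - 2 * cc * a (Suc p) + (4 * cc^2 - 1) * b (Suc p)" by (rule rb)
      also have "\<dots> = (4 * cc^2 - 2) * b (Suc p) - b p" by (simp only: h2) (simp add: algebra_simps power2_eq_square)
      finally show ?thesis by (simp only: tau)
    qed
    ultimately show ?thesis using rec_period[OF k3] by blast
  qed
  define Sa where "Sa = (\<Sum>q<k. a q)"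
  define Sb where "Sb = (\<Sum>q<k. b q)"
  have sha: "(\<Sum>q<k. a (Suc q)) = Sa" unfolding Sa_def
    using per sum.lessThan_Suc_shift[of a k] sum.lessThan_Suc[of a k] by simp
  have shb: "(\<Sum>q<k. b (Suc q)) = Sb" unfolding Sb_def
    using per sum.lessThan_Suc_shift[of b k] sum.lessThan_Suc[of b k] by simp
  have "(\<Sum>q<k. a (Suc q)) = (\<Sum>q<k. - a q + 2 * cc * b q)" by (simp only: ra)
  also have "\<dots> = - Sa + 2 * cc * Sb" unfolding Sa_def Sb_def
    by (simp add: sum.distrib sum_distrib_left sum_negf sum_subtractf)
  finally have e1: "Sa = - Sa + 2 * cc * Sb" using sha by simp
  have "(\<Sum>q<k. b (Suc q)) = (\<Sum>q<k. - 2 * cc * a q + (4 * cc^2 - 1) * b q)" by (simp only: rb)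
  also have "\<dots> = - 2 * cc * Sa + (4 * cc^2 - 1) * Sb" unfolding Sa_def Sb_def
    by (simp add: sum.distrib sum_distrib_left sum_negf sum_subtractf)
  finally have e2: "Sb = - 2 * cc * Sa + (4 * cc^2 - 1) * Sb" using shb by simp
  have "Sa = cc * Sb" using e1 by simp
  with e2 have "Sb * (1 - cc^2) = 0" by (simp add: algebra_simps power2_eq_square)
  with c2 have Sb0: "Sb = 0" by simp
  then have Sa0: "Sa = 0" using \<open>Sa = cc * Sb\<close> by simp
  have "(\<Sum>q<k. 4 * cc * b q - 2 * a q) = 4 * cc * Sb - 2 * Sa"
    unfolding Sa_def Sb_def by (simp add: sum_subtractf sum_distrib_left)
  moreover have "(\<Sum>q<k. - 2 * b q) = - 2 * Sb" unfolding Sb_def by (simp add: sum_distrib_left)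
  ultimately have "(\<rho> ^^ k) u = u" using pw[of k] Sa0 Sb0 by simp
  then show "((sig n c i \<circ> sig n c j) ^^ k) u = id u" by (simp add: \<rho>_def)
qed



definition act :: "(nat \<Rightarrow> 'c \<Rightarrow> 'c) \<Rightarrow> nat list \<Rightarrow> 'c \<Rightarrow> 'c" where
  "act f ws = foldr (\<lambda>i g. f i \<circ> g) ws id"

lemma act_Nil[simp]: "act f [] = id" by (simp add: act_def)
lemma act_Cons[simp]: "act f (x # xs) = f x \<circ> act f xs" by (simp add: act_def)
lemma act_append: "act f (xs @ ys) = act f xs \<circ> act f ys"
  by (induction xs) auto

lemma act_cancel_cons:
  assumes "\<And>l. f l \<circ> f l = id"
  shows "act f (cancel_cons x w) = f x \<circ> act f w"
proof (cases w)
  case Nil then show ?thesis by (simp add: cancel_cons_def)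
next
  case (Cons y w')
  show ?thesis
  proof (cases "x = y")
    case True
    then have "f x \<circ> act f w = (f x \<circ> f x) \<circ> act f w'" using Cons by (simp add: comp_assoc)
    then show ?thesis using Cons True assms by (simp add: cancel_cons_def)
  next
    case False then show ?thesis using Cons by (simp add: cancel_cons_def)
  qed
qed

lemma act_word_mult:
  assumes "\<And>l. f l \<circ> f l = id"
  shows "act f (word_mult xs ys) = act f xs \<circ> act f ys"
  by (induction xs) (auto simp: word_mult_Cons act_cancel_cons[OF assms] comp_assoc)

lemma act_rev:
  assumes "\<And>l. f l \<circ> f l = id"
  shows "act f (rev xs) \<circ> act f xs = id"
proof (induction xs)
  case (Cons x xs)
  have "act f (rev (x#xs)) = act f (rev xs) \<circ> f x" by (simp add: act_append)
  then have "act f (rev (x#xs)) \<circ> act f (x#xs) = act f (rev xs) \<circ> (f x \<circ> f x) \<circ> act f xs"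
    by (simp only: act_Cons comp_assoc)
  then show ?case using Cons assms by (simp only: id_comp comp_id)
qed simp

locale cox =
  fixes W :: "('a, 'b) monoid_scheme" and n :: nat and s :: "nat \<Rightarrow> 'a" and m :: "nat \<Rightarrow> nat \<Rightarrow> enat"
  assumes cs: "coxeter_system W n s m"
begin

abbreviation "F \<equiv> Gn2 n"
abbreviation "phi \<equiv> phi_tilde W s"

lemma W_group: "group W" using cs by (simp add: coxeter_system_def)
lemma F_group: "group F" by (rule group_Gn2)
lemma phi_hom: "phi \<in> hom F W" using cs by (simp add: coxeter_system_def)
lemma ghom: "group_hom F W phi"
  using W_group F_group phi_hom by (simp add: group_hom_def group_hom_axioms_def)
lemma s_carrier: "i \<le> n \<Longrightarrow> s i \<in> carrier W" using cs by (simp add: coxeter_system_def)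
lemma cmat: "coxeter_matrix n m" using cs by (simp add: coxeter_system_def)
lemma phi_surj: "phi ` carrier F = carrier W" using cs by (simp add: coxeter_system_def)
lemma ker: "kernel F W phi = normal_closure F (coxeter_relators n m)"
  using cs by (simp add: coxeter_system_def)

interpretation Wg: group W by (rule W_group)
interpretation Fg: group F by (rule F_group)
interpretation hg: group_hom F W phi by (rule ghom)

lemma phi_Nil[simp]: "phi [] = \<one>\<^bsub>W\<^esub>" by (simp add: phi_tilde_def)
lemma phi_Cons[simp]: "phi (x # xs) = s x \<otimes>\<^bsub>W\<^esub> phi xs" by (simp add: phi_tilde_def)

lemma phi_closed: "set xs \<subseteq> {0..n} \<Longrightarrow> phi xs \<in> carrier W"
  by (induction xs) (auto simp: s_carrier)

lemma phi_append: "set xs \<subseteq> {0..n} \<Longrightarrow> set ys \<subseteq> {0..n} \<Longrightarrow> phi (xs @ ys) = phi xs \<otimes>\<^bsub>W\<^esub> phi ys"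
  by (induction xs) (auto simp: s_carrier phi_closed Wg.m_assoc)

lemma phi_single: "i \<le> n \<Longrightarrow> phi [i] = s i" by (simp add: s_carrier)

lemma F_carrier: "carrier F = red_words n" by (simp add: Gn2_def)
lemma F_mult: "x \<otimes>\<^bsub>F\<^esub> y = word_mult x y" by (simp add: Gn2_def)
lemma F_one: "\<one>\<^bsub>F\<^esub> = []" by (simp add: Gn2_def)

lemma s_sq: "i \<le> n \<Longrightarrow> s i \<otimes>\<^bsub>W\<^esub> s i = \<one>\<^bsub>W\<^esub>"
proof -
  assume i: "i \<le> n"
  have c: "[i] \<in> carrier F" by (simp add: F_carrier red_Cons i)
  have "phi ([i] \<otimes>\<^bsub>F\<^esub> [i]) = phi [i] \<otimes>\<^bsub>W\<^esub> phi [i]" using c by simp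
  moreover have "[i] \<otimes>\<^bsub>F\<^esub> [i] = []" by (simp add: F_mult word_mult_Cons cancel_cons_def)
  ultimately show ?thesis using i by (simp add: s_carrier)
qed

lemma s_inv: "i \<le> n \<Longrightarrow> inv\<^bsub>W\<^esub> (s i) = s i"
  using s_sq s_carrier Wg.inv_char by metis

lemma phi_cancel_cons: "x \<le> n \<Longrightarrow> set w \<subseteq> {0..n} \<Longrightarrow> phi (cancel_cons x w) = s x \<otimes>\<^bsub>W\<^esub> phi w"
proof (cases w)
  case (Cons y w')
  assume x: "x \<le> n" and w: "set w \<subseteq> {0..n}"
  show ?thesis
  proof (cases "x = y")
    case True
    have "s x \<otimes>\<^bsub>W\<^esub> phi w = (s x \<otimes>\<^bsub>W\<^esub> s x) \<otimes>\<^bsub>W\<^esub> phi w'"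
      using Cons True x w by (simp add: Wg.m_assoc s_carrier phi_closed)
    then show ?thesis using Cons True x w by (simp add: cancel_cons_def s_sq phi_closed)
  qed (use Cons in \<open>auto simp: cancel_cons_def\<close>)
qed (simp add: cancel_cons_def)

lemma set_cancel_cons: "set (cancel_cons x w) \<subseteq> insert x (set w)"
  by (cases w) (auto simp: cancel_cons_def)

lemma set_word_mult: "set (word_mult xs ys) \<subseteq> set xs \<union> set ys"
  apply (induction xs) apply simp
  by (simp add: word_mult_Cons) (meson insert_mono set_cancel_cons subset_trans)

lemma phi_word_mult: "set xs \<subseteq> {0..n} \<Longrightarrow> set ys \<subseteq> {0..n} \<Longrightarrow> phi (word_mult xs ys) = phi xs \<otimes>\<^bsub>W\<^esub> phi ys"
proof (induction xs)
  case (Cons x xs)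
  have "set (word_mult xs ys) \<subseteq> {0..n}" using set_word_mult Cons.prems by fastforce
  then show ?case using Cons by (simp add: word_mult_Cons phi_cancel_cons Wg.m_assoc s_carrier phi_closed)
qed (simp add: phi_closed)

lemma phi_rev: "set xs \<subseteq> {0..n} \<Longrightarrow> phi (rev xs) = inv\<^bsub>W\<^esub> (phi xs)"
proof (induction xs)
  case (Cons x xs)
  then have "phi (rev (x#xs)) = inv\<^bsub>W\<^esub> (phi xs) \<otimes>\<^bsub>W\<^esub> s x" by (simp add: phi_append s_carrier)
  then show ?case using Cons by (simp add: Wg.inv_mult_group s_carrier phi_closed s_inv)
qed simp

lemma surj_list: "w \<in> carrier W \<Longrightarrow> \<exists>xs. set xs \<subseteq> {0..n} \<and> phi xs = w"
  using phi_surj by (force simp: F_carrier red_words_def)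

lemma Wsub_eq: "I \<subseteq> {0..n} \<Longrightarrow> Wsub W s I = phi ` {xs. set xs \<subseteq> I}"
proof
  assume I: "I \<subseteq> {0..n}"
  show "Wsub W s I \<subseteq> phi ` {xs. set xs \<subseteq> I}"
  proof
    fix x assume "x \<in> Wsub W s I"
    then show "x \<in> phi ` {xs. set xs \<subseteq> I}" unfolding Wsub_def
    proof (induction rule: generate.induct)
      case one then show ?case by (force intro: image_eqI[of _ _ "[]"])
    next
      case (incl h) then obtain i where "i \<in> I" "h = s i" by auto
      then show ?case using I by (intro image_eqI[of _ _ "[i]"]) (auto simp: s_carrier)
    next
      case (inv h) then obtain i where "i \<in> I" "h = s i" by auto
      then show ?case using I s_inv by (intro image_eqI[of _ _ "[i]"]) (auto simp: s_carrier)
    next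
      case (eng h1 h2)
      then obtain x1 x2 where "set x1 \<subseteq> I" "set x2 \<subseteq> I" "h1 = phi x1" "h2 = phi x2" by auto
      then show ?case using I by (intro image_eqI[of _ _ "x1 @ x2"]) (auto simp: phi_append)
    qed
  qed
  show "phi ` {xs. set xs \<subseteq> I} \<subseteq> Wsub W s I"
  proof safe
    fix xs assume "set xs \<subseteq> I"
    then show "phi xs \<in> Wsub W s I" unfolding Wsub_def
      by (induction xs) (auto intro: generate.intros)
  qed
qed

lemma Wsub_subgroup: "I \<subseteq> {0..n} \<Longrightarrow> subgroup (Wsub W s I) W"
  unfolding Wsub_def by (rule Wg.generate_is_subgroup) (auto simp: s_carrier)

lemma alpha_carrier: "i \<le> n \<Longrightarrow> alpha i \<in> carrier F"
  by (simp add: alpha_def F_carrier red_Cons)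

lemma phi_alpha: "i \<le> n \<Longrightarrow> phi (alpha i) = s i" by (simp add: alpha_def s_carrier)

lemma Ksub_subgroup: "I \<subseteq> {0..n} \<Longrightarrow> subgroup (Ksub n I) F"
  unfolding Ksub_def by (rule Fg.generate_is_subgroup) (auto simp: alpha_carrier)

lemma phi_Ksub: "I \<subseteq> {0..n} \<Longrightarrow> phi ` Ksub n I = Wsub W s I"
proof -
  assume I: "I \<subseteq> {0..n}"
  have "alpha ` I \<subseteq> carrier F" using I by (auto simp: alpha_carrier)
  then have "phi ` Ksub n I = generate W (phi ` alpha ` I)"
    unfolding Ksub_def using hg.generate_img by simp
  also have "phi ` alpha ` I = s ` I" using I by (force simp: phi_alpha)
  finally show ?thesis by (simp add: Wsub_def)
qed

lemma relators_carrier: "coxeter_relators n m \<subseteq> carrier F"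
  unfolding coxeter_relators_def by (auto intro!: Fg.nat_pow_closed Fg.m_closed alpha_carrier)

lemma act_kills:
  assumes inv: "\<And>l. f l \<circ> f l = id"
    and rel: "\<And>i j k. i \<le> n \<Longrightarrow> j \<le> n \<Longrightarrow> m i j = enat k \<Longrightarrow> (f i \<circ> f j) ^^ k = id"
    and x: "x \<in> kernel F W phi"
  shows "act f x = id"
proof -
  have powl: "act f (y [^]\<^bsub>F\<^esub> (k::nat)) = act f y ^^ k" for y k
    by (induction k) (simp_all add: F_mult F_one act_word_mult[OF inv] funpow_Suc_right del: funpow.simps)
  have r: "act f r = id" if "r \<in> coxeter_relators n m" for r
  proof -
    from that obtain i j k where "i \<le> n" "j \<le> n" "m i j = enat k"
      "r = (alpha i \<otimes>\<^bsub>F\<^esub> alpha j) [^]\<^bsub>F\<^esub> k" by (auto simp: coxeter_relators_def)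
    then show ?thesis using rel powl by (simp add: F_mult act_word_mult[OF inv] alpha_def)
  qed
  have g: "act f h = id" if "h \<in> {g \<otimes>\<^bsub>F\<^esub> a \<otimes>\<^bsub>F\<^esub> inv\<^bsub>F\<^esub> g | g a. g \<in> carrier F \<and> a \<in> coxeter_relators n m}" for h
  proof -
    from that obtain g a where ga: "g \<in> carrier F" "a \<in> coxeter_relators n m" "h = g \<otimes>\<^bsub>F\<^esub> a \<otimes>\<^bsub>F\<^esub> inv\<^bsub>F\<^esub> g" by auto
    have "act f h = act f g \<circ> act f a \<circ> act f (inv\<^bsub>F\<^esub> g)" using ga by (simp add: F_mult act_word_mult[OF inv])
    also have "\<dots> = act f (g \<otimes>\<^bsub>F\<^esub> inv\<^bsub>F\<^esub> g)" using ga r by (simp add: F_mult act_word_mult[OF inv])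
    also have "\<dots> = id" using ga by (simp add: F_one)
    finally show ?thesis .
  qed
  have hc: "h \<in> carrier F" if "h \<in> {g \<otimes>\<^bsub>F\<^esub> a \<otimes>\<^bsub>F\<^esub> inv\<^bsub>F\<^esub> g | g a. g \<in> carrier F \<and> a \<in> coxeter_relators n m}" for h
    using that relators_carrier by auto
  from x have "x \<in> normal_closure F (coxeter_relators n m)" using ker by simp
  then show ?thesis unfolding normal_closure_def
  proof (induction rule: generate.induct)
    case one then show ?case by (simp add: F_one)
  next
    case (incl h) then show ?case using g by simp
  next
    case (inv h)
    have "act f (inv\<^bsub>F\<^esub> h) = act f (inv\<^bsub>F\<^esub> h) \<circ> act f h" using g inv by simp
    also have "\<dots> = act f (inv\<^bsub>F\<^esub> h \<otimes>\<^bsub>F\<^esub> h)" by (simp add: F_mult act_word_mult[OF \<open>\<And>l. f l \<circ> f l = id\<close>])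
    also have "\<dots> = id" using hc[OF inv] by (simp add: F_one)
    finally show ?case .
  next
    case (eng h1 h2) then show ?case by (simp add: F_mult act_word_mult[OF \<open>\<And>l. f l \<circ> f l = id\<close>])
  qed
qed

lemma act_factor:
  assumes inv: "\<And>l. f l \<circ> f l = id"
    and rel: "\<And>i j k. i \<le> n \<Longrightarrow> j \<le> n \<Longrightarrow> m i j = enat k \<Longrightarrow> (f i \<circ> f j) ^^ k = id"
    and u: "set u \<subseteq> {0..n}" and v: "set v \<subseteq> {0..n}" and e: "phi u = phi v"
  shows "act f u = act f v"
proof -
  define r where "r = word_mult (u @ rev v) []"
  have uv: "set (u @ rev v) \<subseteq> {0..n}" using u v by auto
  have rc: "r \<in> carrier F" unfolding r_def F_carrier using uv by (simp add: word_mult_red)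
  have "phi r = phi (u @ rev v) \<otimes>\<^bsub>W\<^esub> \<one>\<^bsub>W\<^esub>" unfolding r_def using uv by (simp add: phi_word_mult)
  also have "\<dots> = phi u \<otimes>\<^bsub>W\<^esub> inv\<^bsub>W\<^esub> (phi v)" using u v by (simp add: phi_append phi_rev phi_closed)
  also have "\<dots> = \<one>\<^bsub>W\<^esub>" using e v by (simp add: phi_closed)
  finally have "r \<in> kernel F W phi" using rc by (simp add: kernel_def)
  then have "act f r = id" using act_kills[of f, OF inv rel] by blast
  then have "act f u \<circ> act f (rev v) = id" by (simp add: r_def act_word_mult[OF inv] act_append)
  then have "act f u \<circ> (act f (rev v) \<circ> act f v) = act f v" by (metis comp_assoc id_comp)
  then show ?thesis using act_rev[OF inv] by simp
qed

end


fun cnt :: "(nat \<Rightarrow> bool) \<Rightarrow> nat \<Rightarrow> nat" where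
  "cnt P 0 = 0"
| "cnt P (Suc N) = cnt P N + (if P N then 1 else 0)"

lemma cnt_add: "cnt P (a + N) = cnt P a + cnt (\<lambda>p. P (a + p)) N"
  by (induction N) auto

lemma cnt_cong: "(\<And>p. p < N \<Longrightarrow> P p = Q p) \<Longrightarrow> cnt P N = cnt Q N"
  by (induction N) auto

lemma cnt_periodic: "(\<And>p. P (k + p) = P p) \<Longrightarrow> cnt P (k + k) = 2 * cnt P k"
  using cnt_add[of P k k] by simp

primrec Par :: "('a, 'b) monoid_scheme \<Rightarrow> (nat \<Rightarrow> 'a) \<Rightarrow> nat list \<Rightarrow> 'a \<Rightarrow> bool" where
  "Par W s [] t = False"
| "Par W s (i # ws) t = (Par W s ws t \<noteq> (phi_tilde W s ws \<otimes>\<^bsub>W\<^esub> t \<otimes>\<^bsub>W\<^esub> inv\<^bsub>W\<^esub> (phi_tilde W s ws) = s i))"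

context cox
begin

interpretation Wg: group W by (rule W_group)
interpretation Fg: group F by (rule F_group)
interpretation hg: group_hom F W phi by (rule ghom)

section \<open>geometric representation\<close>

definition cm :: "nat \<Rightarrow> nat \<Rightarrow> real" where
  "cm i j = (case m i j of enat k \<Rightarrow> - cos (pi / real k) | \<infinity> \<Rightarrow> -1)"

lemma m_ii: "i \<le> n \<Longrightarrow> m i i = 1" using cmat by (simp add: coxeter_matrix_def)
lemma m_sym: "i \<le> n \<Longrightarrow> j \<le> n \<Longrightarrow> m i j = m j i" using cmat by (simp add: coxeter_matrix_def)
lemma m_ge2: "i \<le> n \<Longrightarrow> j \<le> n \<Longrightarrow> i \<noteq> j \<Longrightarrow> m i j \<ge> 2" using cmat by (simp add: coxeter_matrix_def)

lemma cm_ii: "l \<le> n \<Longrightarrow> cm l l = 1"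
  by (simp add: cm_def m_ii one_enat_def)

lemma geo_invol: "sig n cm l \<circ> sig n cm l = id"
  by (rule sig_invol) (simp add: cm_ii)

lemma geo_rel: assumes "i \<le> n" "j \<le> n" "m i j = enat k" shows "(sig n cm i \<circ> sig n cm j) ^^ k = id"
proof (cases "i = j")
  case True
  then have "k = 1" using assms m_ii by (simp add: one_enat_def)
  then show ?thesis using True geo_invol by simp
next
  case False
  have "enat k \<ge> 2" using m_ge2[OF assms(1,2) False] assms(3) by simp
  then have k: "k \<ge> 2" by (simp add: numeral_eq_enat)
  have "m j i = enat k" using m_sym assms by simp
  have c1: "cm i i = 1" "cm j j = 1" using assms cm_ii by auto
  have c2: "cm i j = - cos (pi / k)" "cm j i = - cos (pi / k)" using assms \<open>m j i = enat k\<close> by (simp_all add: cm_def)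
  show ?thesis using assms(1,2) False c1 c2 k by (rule sig_rel)
qed

lemma act_geo_fix: "x \<notin> set u \<Longrightarrow> act (sig n cm) u v x = v x"
  by (induction u arbitrary: v) (auto simp: sig_def ev_def)

lemma s_in_Wsub:
  assumes x: "x \<le> n" and I: "I \<subseteq> {0..n}" and sx: "s x \<in> Wsub W s I"
  shows "x \<in> I"
proof (rule ccontr)
  assume xI: "x \<notin> I"
  from sx obtain u where u: "set u \<subseteq> I" "phi u = s x" using Wsub_eq[OF I] by auto
  have "act (sig n cm) [x] = act (sig n cm) u"
    using act_factor[of "sig n cm" "[x]" u] geo_invol geo_rel u I x by (auto simp: s_carrier)
  then have "act (sig n cm) [x] (ev x) x = act (sig n cm) u (ev x) x" by simp
  moreover have "act (sig n cm) u (ev x) x = 1" using xI u by (subst act_geo_fix) (auto simp: ev_def)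
  moreover have "act (sig n cm) [x] (ev x) x = -1"
  proof -
    have "Bf n cm x (ev x) = 1" using Bf_ev[of x n cm x 1] x cm_ii by simp
    then show ?thesis using x by (simp add: sig_def ev_def)
  qed
  ultimately show False by simp
qed

section \<open>the reflection action\<close>

definition chi :: "nat \<Rightarrow> 'a \<times> bool \<Rightarrow> 'a \<times> bool" where
  "chi l = (\<lambda>(t, e). if l \<le> n \<and> t \<in> carrier W then (s l \<otimes>\<^bsub>W\<^esub> t \<otimes>\<^bsub>W\<^esub> s l, e \<noteq> (t = s l)) else (t, e))"

lemma conj_s_eq: "l \<le> n \<Longrightarrow> t \<in> carrier W \<Longrightarrow> (s l \<otimes>\<^bsub>W\<^esub> t \<otimes>\<^bsub>W\<^esub> s l = s l) = (t = s l)"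
  by (metis Wg.l_one Wg.m_assoc Wg.m_closed Wg.r_one s_carrier s_sq)

lemma conj_s_conj: "l \<le> n \<Longrightarrow> t \<in> carrier W \<Longrightarrow> s l \<otimes>\<^bsub>W\<^esub> (s l \<otimes>\<^bsub>W\<^esub> t \<otimes>\<^bsub>W\<^esub> s l) \<otimes>\<^bsub>W\<^esub> s l = t"
  by (metis Wg.l_one Wg.m_assoc Wg.m_closed Wg.r_one s_carrier s_sq)

lemma chi_invol: "chi l \<circ> chi l = id"
proof (rule ext, clarify)
  fix t e
  show "(chi l \<circ> chi l) (t, e) = id (t, e)"
  proof (cases "l \<le> n \<and> t \<in> carrier W")
    case True
    then have t': "s l \<otimes>\<^bsub>W\<^esub> t \<otimes>\<^bsub>W\<^esub> s l \<in> carrier W" by (simp add: s_carrier)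
    have 1: "chi l (t, e) = (s l \<otimes>\<^bsub>W\<^esub> t \<otimes>\<^bsub>W\<^esub> s l, e \<noteq> (t = s l))" using True by (simp add: chi_def)
    have 2: "chi l (s l \<otimes>\<^bsub>W\<^esub> t \<otimes>\<^bsub>W\<^esub> s l, x) = (t, x \<noteq> (t = s l))" for x
      using True t' conj_s_eq[of l "s l \<otimes>\<^bsub>W\<^esub> t \<otimes>\<^bsub>W\<^esub> s l"] conj_s_eq[of l t] conj_s_conj[of l t]
      by (simp add: chi_def)
    show ?thesis using 1 2 by auto
  qed (auto simp: chi_def)
qed

lemma relator_kernel: "r \<in> coxeter_relators n m \<Longrightarrow> phi r = \<one>\<^bsub>W\<^esub>"
proof -
  assume r: "r \<in> coxeter_relators n m"
  then have rc: "r \<in> carrier F" using relators_carrier by auto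
  have "\<one>\<^bsub>F\<^esub> \<otimes>\<^bsub>F\<^esub> r \<otimes>\<^bsub>F\<^esub> inv\<^bsub>F\<^esub> \<one>\<^bsub>F\<^esub> = r" using rc by simp
  then have "r \<in> normal_closure F (coxeter_relators n m)" unfolding normal_closure_def
    using r by (intro generate.incl) (metis (mono_tags, lifting) Fg.one_closed mem_Collect_eq)
  then have "r \<in> kernel F W phi" using ker by simp
  then show ?thesis by (simp add: kernel_def)
qed

lemma pow_rel: assumes "i \<le> n" "j \<le> n" "m i j = enat k" shows "(s i \<otimes>\<^bsub>W\<^esub> s j) [^]\<^bsub>W\<^esub> k = \<one>\<^bsub>W\<^esub>"
proof -
  have "(alpha i \<otimes>\<^bsub>F\<^esub> alpha j) [^]\<^bsub>F\<^esub> k \<in> coxeter_relators n m"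
    using assms unfolding coxeter_relators_def by blast
  then have "phi ((alpha i \<otimes>\<^bsub>F\<^esub> alpha j) [^]\<^bsub>F\<^esub> k) = \<one>\<^bsub>W\<^esub>" by (rule relator_kernel)
  moreover have "phi ((alpha i \<otimes>\<^bsub>F\<^esub> alpha j) [^]\<^bsub>F\<^esub> k) = (s i \<otimes>\<^bsub>W\<^esub> s j) [^]\<^bsub>W\<^esub> k"
    using assms by (simp add: hg.hom_nat_pow alpha_carrier phi_alpha)
  ultimately show ?thesis by simp
qed

lemma conj_eq_iff:
  assumes "a \<in> carrier W" "b \<in> carrier W" "t \<in> carrier W" "y \<in> carrier W" "a \<otimes>\<^bsub>W\<^esub> b = \<one>\<^bsub>W\<^esub>"
  shows "(a \<otimes>\<^bsub>W\<^esub> t \<otimes>\<^bsub>W\<^esub> b = y) = (t = b \<otimes>\<^bsub>W\<^esub> y \<otimes>\<^bsub>W\<^esub> a)"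
proof -
  have ba: "b \<otimes>\<^bsub>W\<^esub> a = \<one>\<^bsub>W\<^esub>" using assms Wg.inv_comm by blast
  have ab2: "\<And>z. z \<in> carrier W \<Longrightarrow> a \<otimes>\<^bsub>W\<^esub> (b \<otimes>\<^bsub>W\<^esub> z) = z" using assms by (metis Wg.m_assoc Wg.l_one)
  have ba2: "\<And>z. z \<in> carrier W \<Longrightarrow> b \<otimes>\<^bsub>W\<^esub> (a \<otimes>\<^bsub>W\<^esub> z) = z" using assms ba by (metis Wg.m_assoc Wg.l_one)
  show ?thesis
  proof
    assume h: "a \<otimes>\<^bsub>W\<^esub> t \<otimes>\<^bsub>W\<^esub> b = y"
    show "t = b \<otimes>\<^bsub>W\<^esub> y \<otimes>\<^bsub>W\<^esub> a" using assms ab2 ba2 ba h[symmetric] by (simp add: Wg.m_assoc)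
  next
    assume h: "t = b \<otimes>\<^bsub>W\<^esub> y \<otimes>\<^bsub>W\<^esub> a"
    show "a \<otimes>\<^bsub>W\<^esub> t \<otimes>\<^bsub>W\<^esub> b = y" using assms ab2 ba2 h by (simp add: Wg.m_assoc)
  qed
qed

lemma powc: "x \<in> carrier W \<Longrightarrow> x [^]\<^bsub>W\<^esub> (l::nat) \<otimes>\<^bsub>W\<^esub> x = x \<otimes>\<^bsub>W\<^esub> x [^]\<^bsub>W\<^esub> l"
  by (metis Wg.nat_pow_Suc Wg.nat_pow_Suc2)

lemma chi_rel:
  assumes ij: "i \<le> n" "j \<le> n" and mk: "m i j = enat k"
  shows "(chi i \<circ> chi j) ^^ k = id"
proof (rule ext, clarify)
  fix t e
  define P where "P = s i \<otimes>\<^bsub>W\<^esub> s j"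
  define Q where "Q = s j \<otimes>\<^bsub>W\<^esub> s i"
  have Pc: "P \<in> carrier W" and Qc: "Q \<in> carrier W" using ij by (simp_all add: P_def Q_def s_carrier)
  have si: "s i \<in> carrier W" and sj: "s j \<in> carrier W" using ij by (simp_all add: s_carrier)
  have PQ: "P \<otimes>\<^bsub>W\<^esub> Q = \<one>\<^bsub>W\<^esub>"
    unfolding P_def Q_def using si sj ij by (simp add: Wg.m_assoc s_sq) (simp add: Wg.m_assoc[symmetric] s_sq)
  have PlQl: "P [^]\<^bsub>W\<^esub> l \<otimes>\<^bsub>W\<^esub> Q [^]\<^bsub>W\<^esub> l = \<one>\<^bsub>W\<^esub>" for l :: nat
  proof (induction l)
    case (Suc l)
    have "P [^]\<^bsub>W\<^esub> Suc l \<otimes>\<^bsub>W\<^esub> Q [^]\<^bsub>W\<^esub> Suc l = P [^]\<^bsub>W\<^esub> l \<otimes>\<^bsub>W\<^esub> (P \<otimes>\<^bsub>W\<^esub> Q) \<otimes>\<^bsub>W\<^esub> Q [^]\<^bsub>W\<^esub> l"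
      using Pc Qc by (simp add: Wg.m_assoc powc[of Q])
    then show ?case using Suc Pc Qc PQ by simp
  qed simp
  have sjP: "s j \<otimes>\<^bsub>W\<^esub> P [^]\<^bsub>W\<^esub> l = Q [^]\<^bsub>W\<^esub> l \<otimes>\<^bsub>W\<^esub> s j" for l :: nat
  proof (induction l)
    case (Suc l)
    have "s j \<otimes>\<^bsub>W\<^esub> P [^]\<^bsub>W\<^esub> Suc l = (s j \<otimes>\<^bsub>W\<^esub> P [^]\<^bsub>W\<^esub> l) \<otimes>\<^bsub>W\<^esub> P"
      using Pc sj by (simp add: Wg.m_assoc)
    also have "\<dots> = Q [^]\<^bsub>W\<^esub> l \<otimes>\<^bsub>W\<^esub> (s j \<otimes>\<^bsub>W\<^esub> P)" using Suc Pc Qc sj by (simp add: Wg.m_assoc)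
    also have "s j \<otimes>\<^bsub>W\<^esub> P = Q \<otimes>\<^bsub>W\<^esub> s j"
      unfolding P_def Q_def using si sj ij by (simp add: Wg.m_assoc s_sq)
    finally show ?case using Qc sj by (simp add: Wg.m_assoc)
  qed (simp add: sj)
  define c where "c p = Q [^]\<^bsub>W\<^esub> p \<otimes>\<^bsub>W\<^esub> s j" for p :: nat
  have main: "t \<in> carrier W \<Longrightarrow> ((chi i \<circ> chi j) ^^ l) (t, e) =
      (P [^]\<^bsub>W\<^esub> l \<otimes>\<^bsub>W\<^esub> t \<otimes>\<^bsub>W\<^esub> Q [^]\<^bsub>W\<^esub> l, e \<noteq> odd (cnt (\<lambda>p. t = c p) (2 * l)))" for l
  proof (induction l)
    case 0 then show ?case by simp
  next
    case (Suc l)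
    define x where "x = P [^]\<^bsub>W\<^esub> l \<otimes>\<^bsub>W\<^esub> t \<otimes>\<^bsub>W\<^esub> Q [^]\<^bsub>W\<^esub> l"
    have xc: "x \<in> carrier W" using Suc Pc Qc by (simp add: x_def)
    have e1: "(x = s j) = (t = c (2 * l))"
    proof -
      have "(x = s j) = (t = Q [^]\<^bsub>W\<^esub> l \<otimes>\<^bsub>W\<^esub> s j \<otimes>\<^bsub>W\<^esub> P [^]\<^bsub>W\<^esub> l)"
        unfolding x_def using Suc Pc Qc sj PlQl by (intro conj_eq_iff) auto
      also have "Q [^]\<^bsub>W\<^esub> l \<otimes>\<^bsub>W\<^esub> s j \<otimes>\<^bsub>W\<^esub> P [^]\<^bsub>W\<^esub> l = c (2 * l)"
        unfolding c_def using Pc Qc sj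
        by (simp add: Wg.m_assoc sjP mult_2 Wg.nat_pow_mult[symmetric])
      finally show ?thesis .
    qed
    have e2: "(s j \<otimes>\<^bsub>W\<^esub> x \<otimes>\<^bsub>W\<^esub> s j = s i) = (t = c (Suc (2 * l)))"
    proof -
      have "(s j \<otimes>\<^bsub>W\<^esub> x \<otimes>\<^bsub>W\<^esub> s j = s i) = (x = s j \<otimes>\<^bsub>W\<^esub> s i \<otimes>\<^bsub>W\<^esub> s j)"
        using xc sj si ij s_sq by (intro conj_eq_iff) auto
      also have "\<dots> = (t = Q [^]\<^bsub>W\<^esub> l \<otimes>\<^bsub>W\<^esub> (s j \<otimes>\<^bsub>W\<^esub> s i \<otimes>\<^bsub>W\<^esub> s j) \<otimes>\<^bsub>W\<^esub> P [^]\<^bsub>W\<^esub> l)"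
        unfolding x_def using Suc Pc Qc sj si PlQl by (intro conj_eq_iff) auto
      also have "Q [^]\<^bsub>W\<^esub> l \<otimes>\<^bsub>W\<^esub> (s j \<otimes>\<^bsub>W\<^esub> s i \<otimes>\<^bsub>W\<^esub> s j) \<otimes>\<^bsub>W\<^esub> P [^]\<^bsub>W\<^esub> l
          = Q [^]\<^bsub>W\<^esub> l \<otimes>\<^bsub>W\<^esub> Q \<otimes>\<^bsub>W\<^esub> (s j \<otimes>\<^bsub>W\<^esub> P [^]\<^bsub>W\<^esub> l)"
        unfolding Q_def using Pc sj si by (simp add: Wg.m_assoc)
      also have "\<dots> = (Q [^]\<^bsub>W\<^esub> Suc l \<otimes>\<^bsub>W\<^esub> Q [^]\<^bsub>W\<^esub> l) \<otimes>\<^bsub>W\<^esub> s j"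
        using Qc sj by (simp add: Wg.m_assoc sjP)
      also have "Q [^]\<^bsub>W\<^esub> Suc l \<otimes>\<^bsub>W\<^esub> Q [^]\<^bsub>W\<^esub> l = Q [^]\<^bsub>W\<^esub> (Suc (2 * l))"
        by (metis Wg.nat_pow_mult[OF Qc] add_Suc mult_2)
      also have "Q [^]\<^bsub>W\<^esub> (Suc (2 * l)) \<otimes>\<^bsub>W\<^esub> s j = c (Suc (2 * l))" by (simp only: c_def)
      finally show ?thesis .
    qed
    have "((chi i \<circ> chi j) ^^ Suc l) (t, e) = (chi i \<circ> chi j) (((chi i \<circ> chi j) ^^ l) (t, e))"
      by (simp only: funpow.simps comp_apply)
    also have "\<dots> = chi i (chi j (x, e \<noteq> odd (cnt (\<lambda>p. t = c p) (2 * l))))"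
      by (simp only: Suc.IH[OF Suc.prems] x_def comp_apply)
    also have "\<dots> = (s i \<otimes>\<^bsub>W\<^esub> (s j \<otimes>\<^bsub>W\<^esub> x \<otimes>\<^bsub>W\<^esub> s j) \<otimes>\<^bsub>W\<^esub> s i,
        ((e \<noteq> odd (cnt (\<lambda>p. t = c p) (2 * l))) \<noteq> (x = s j)) \<noteq> (s j \<otimes>\<^bsub>W\<^esub> x \<otimes>\<^bsub>W\<^esub> s j = s i))"
      using xc ij sj by (simp add: chi_def)
    also have "s i \<otimes>\<^bsub>W\<^esub> (s j \<otimes>\<^bsub>W\<^esub> x \<otimes>\<^bsub>W\<^esub> s j) \<otimes>\<^bsub>W\<^esub> s i = P [^]\<^bsub>W\<^esub> Suc l \<otimes>\<^bsub>W\<^esub> t \<otimes>\<^bsub>W\<^esub> Q [^]\<^bsub>W\<^esub> Suc l"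
    proof -
      have "s i \<otimes>\<^bsub>W\<^esub> (s j \<otimes>\<^bsub>W\<^esub> x \<otimes>\<^bsub>W\<^esub> s j) \<otimes>\<^bsub>W\<^esub> s i = P \<otimes>\<^bsub>W\<^esub> x \<otimes>\<^bsub>W\<^esub> Q"
        unfolding P_def Q_def using si sj xc by (simp add: Wg.m_assoc)
      also have "\<dots> = (P \<otimes>\<^bsub>W\<^esub> P [^]\<^bsub>W\<^esub> l) \<otimes>\<^bsub>W\<^esub> t \<otimes>\<^bsub>W\<^esub> (Q [^]\<^bsub>W\<^esub> l \<otimes>\<^bsub>W\<^esub> Q)"
        unfolding x_def using Pc Qc Suc.prems by (simp add: Wg.m_assoc del: Wg.nat_pow_Suc nat_pow_Suc)
      also have "P \<otimes>\<^bsub>W\<^esub> P [^]\<^bsub>W\<^esub> l = P [^]\<^bsub>W\<^esub> Suc l" by (rule Wg.nat_pow_Suc2[OF Pc, symmetric])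
      also have "Q [^]\<^bsub>W\<^esub> l \<otimes>\<^bsub>W\<^esub> Q = Q [^]\<^bsub>W\<^esub> Suc l" by simp
      finally show ?thesis .
    qed
    finally show ?case using e1 e2 by simp
  qed
  show "((chi i \<circ> chi j) ^^ k) (t, e) = id (t, e)"
  proof (cases "t \<in> carrier W")
    case False
    have "((chi i \<circ> chi j) ^^ l) (t, e) = (t, e)" for l
      by (induction l) (use False in \<open>auto simp: chi_def\<close>)
    then show ?thesis by simp
  next
    case True
    have Pk: "P [^]\<^bsub>W\<^esub> k = \<one>\<^bsub>W\<^esub>" unfolding P_def by (rule pow_rel[OF ij mk])
    have Qk: "Q [^]\<^bsub>W\<^esub> k = \<one>\<^bsub>W\<^esub>"
    proof -
      have "Q = inv\<^bsub>W\<^esub> P" unfolding P_def Q_def using si sj ij by (simp add: Wg.inv_mult_group s_inv)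
      then show ?thesis using Pk Pc by (simp add: Wg.nat_pow_inv)
    qed
    have per: "(t = c (k + p)) = (t = c p)" for p
      unfolding c_def using Qc sj Qk by (simp add: Wg.nat_pow_mult[symmetric])
    have "cnt (\<lambda>p. t = c p) (2 * k) = 2 * cnt (\<lambda>p. t = c p) k"
      using cnt_periodic[of "\<lambda>p. t = c p" k] per by (simp add: mult_2)
    then show ?thesis using main[OF True, of k] Pk Qk True by simp
  qed
qed

end


context cox
begin

interpretation Wg: group W by (rule W_group)
interpretation Fg: group F by (rule F_group)
interpretation hg: group_hom F W phi by (rule ghom)

lemma phi_inv_Cons: "i \<le> n \<Longrightarrow> set ws \<subseteq> {0..n} \<Longrightarrow>
   inv\<^bsub>W\<^esub> (phi (i # ws)) = inv\<^bsub>W\<^esub> (phi ws) \<otimes>\<^bsub>W\<^esub> s i"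
  by (simp add: Wg.inv_mult_group s_carrier phi_closed s_inv)

lemma act_chi:
  "set ws \<subseteq> {0..n} \<Longrightarrow> t \<in> carrier W \<Longrightarrow>
   act chi ws (t, e) = (phi ws \<otimes>\<^bsub>W\<^esub> t \<otimes>\<^bsub>W\<^esub> inv\<^bsub>W\<^esub> (phi ws), e \<noteq> Par W s ws t)"
proof (induction ws)
  case Nil then show ?case by simp
next
  case (Cons i ws)
  define x where "x = phi ws \<otimes>\<^bsub>W\<^esub> t \<otimes>\<^bsub>W\<^esub> inv\<^bsub>W\<^esub> (phi ws)"
  have i: "i \<le> n" and ws: "set ws \<subseteq> {0..n}" using Cons.prems by auto
  have xc: "x \<in> carrier W" using ws Cons.prems by (simp add: x_def phi_closed)
  have "act chi (i # ws) (t, e) = chi i (x, e \<noteq> Par W s ws t)"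
    using Cons.IH[OF ws Cons.prems(2)] by (simp add: x_def)
  also have "\<dots> = (s i \<otimes>\<^bsub>W\<^esub> x \<otimes>\<^bsub>W\<^esub> s i, (e \<noteq> Par W s ws t) \<noteq> (x = s i))"
    using xc i by (simp add: chi_def)
  also have "s i \<otimes>\<^bsub>W\<^esub> x \<otimes>\<^bsub>W\<^esub> s i = phi (i # ws) \<otimes>\<^bsub>W\<^esub> t \<otimes>\<^bsub>W\<^esub> inv\<^bsub>W\<^esub> (phi (i # ws))"
    unfolding x_def phi_inv_Cons[OF i ws] using i ws Cons.prems by (simp add: Wg.m_assoc s_carrier phi_closed)
  finally show ?case by (auto simp: x_def)
qed

lemma Par_indep:
  assumes u: "set u \<subseteq> {0..n}" and v: "set v \<subseteq> {0..n}" and e: "phi u = phi v" and t: "t \<in> carrier W"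
  shows "Par W s u t = Par W s v t"
proof -
  have "act chi u = act chi v" using act_factor[of chi u v] chi_invol chi_rel u v e by blast
  then have "act chi u (t, False) = act chi v (t, False)" by simp
  then show ?thesis using act_chi[OF u t] act_chi[OF v t] by simp
qed

lemma Par_refl:
  "Par W s ws t \<Longrightarrow> set ws \<subseteq> {0..n} \<Longrightarrow> t \<in> carrier W \<Longrightarrow>
   \<exists>A y B. ws = A @ y # B \<and> t = inv\<^bsub>W\<^esub> (phi B) \<otimes>\<^bsub>W\<^esub> s y \<otimes>\<^bsub>W\<^esub> phi B"
proof (induction ws)
  case Nil then show ?case by simp
next
  case (Cons i ws)
  have i: "i \<le> n" and ws: "set ws \<subseteq> {0..n}" using Cons.prems by auto
  show ?case
  proof (cases "Par W s ws t")
    case True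
    then obtain A y B where "ws = A @ y # B" "t = inv\<^bsub>W\<^esub> (phi B) \<otimes>\<^bsub>W\<^esub> s y \<otimes>\<^bsub>W\<^esub> phi B"
      using Cons.IH ws Cons.prems by blast
    then show ?thesis by (intro exI[of _ "i # A"]) auto
  next
    case False
    then have "phi ws \<otimes>\<^bsub>W\<^esub> t \<otimes>\<^bsub>W\<^esub> inv\<^bsub>W\<^esub> (phi ws) = s i" using Cons.prems by simp
    then have "t = inv\<^bsub>W\<^esub> (phi ws) \<otimes>\<^bsub>W\<^esub> s i \<otimes>\<^bsub>W\<^esub> inv\<^bsub>W\<^esub> (inv\<^bsub>W\<^esub> (phi ws))"
      using conj_eq_iff[of "phi ws" "inv\<^bsub>W\<^esub> (phi ws)" t "s i"] ws i Cons.prems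
      by (simp add: phi_closed s_carrier)
    then have "t = inv\<^bsub>W\<^esub> (phi ws) \<otimes>\<^bsub>W\<^esub> s i \<otimes>\<^bsub>W\<^esub> phi ws" using ws by (simp add: phi_closed)
    then show ?thesis by (intro exI[of _ "[]"]) auto
  qed
qed

lemma Par_append:
  assumes A: "set A \<subseteq> {0..n}" and B: "set B \<subseteq> {0..n}" and t: "t \<in> carrier W"
  shows "Par W s (A @ B) t = (Par W s B t \<noteq> Par W s A (phi B \<otimes>\<^bsub>W\<^esub> t \<otimes>\<^bsub>W\<^esub> inv\<^bsub>W\<^esub> (phi B)))"
proof -
  have AB: "set (A @ B) \<subseteq> {0..n}" using A B by simp
  have tc: "phi B \<otimes>\<^bsub>W\<^esub> t \<otimes>\<^bsub>W\<^esub> inv\<^bsub>W\<^esub> (phi B) \<in> carrier W" using B t by (simp add: phi_closed)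
  have "act chi (A @ B) (t, False) = act chi A (act chi B (t, False))" by (simp add: act_append)
  then show ?thesis using act_chi[OF AB t] act_chi[OF B t] act_chi[OF A tc] by simp
qed

definition minw :: "nat list \<Rightarrow> bool" where
  "minw ws \<longleftrightarrow> set ws \<subseteq> {0..n} \<and> (\<forall>v. set v \<subseteq> {0..n} \<and> phi v = phi ws \<longrightarrow> length ws \<le> length v)"

lemma minw_prefix: "minw (A @ [x]) \<Longrightarrow> minw A"
proof -
  assume m: "minw (A @ [x])"
  then have A: "set A \<subseteq> {0..n}" and x: "x \<le> n" by (auto simp: minw_def)
  show "minw A" unfolding minw_def
  proof (intro conjI allI impI)
    show "set A \<subseteq> {0..n}" by (rule A)
    fix v assume v: "set v \<subseteq> {0..n} \<and> phi v = phi A"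
    then have "phi (v @ [x]) = phi (A @ [x])" using A x by (simp add: phi_append)
    moreover have "set (v @ [x]) \<subseteq> {0..n}" using v x by simp
    ultimately have "length (A @ [x]) \<le> length (v @ [x])" using m unfolding minw_def by blast
    then show "length A \<le> length v" by simp
  qed
qed

lemma no_Par_prefix:
  assumes m: "minw (A @ [x])"
  shows "\<not> Par W s A (s x)"
proof
  assume P: "Par W s A (s x)"
  have A: "set A \<subseteq> {0..n}" and x: "x \<le> n" using m by (auto simp: minw_def)
  obtain A1 y A2 where Ae: "A = A1 @ y # A2" and sx: "s x = inv\<^bsub>W\<^esub> (phi A2) \<otimes>\<^bsub>W\<^esub> s y \<otimes>\<^bsub>W\<^esub> phi A2"
    using Par_refl[OF P A s_carrier[OF x]] by blast
  have A1: "set A1 \<subseteq> {0..n}" and y: "y \<le> n" and A2: "set A2 \<subseteq> {0..n}" using A Ae by auto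
  have "phi A2 \<otimes>\<^bsub>W\<^esub> s x = s y \<otimes>\<^bsub>W\<^esub> phi A2"
    unfolding sx using A2 y by (simp add: Wg.m_assoc[symmetric] phi_closed s_carrier)
  then have "s y \<otimes>\<^bsub>W\<^esub> (phi A2 \<otimes>\<^bsub>W\<^esub> s x) = phi A2"
    using A2 y by (simp add: Wg.m_assoc[symmetric] phi_closed s_carrier s_sq)
  then have "phi (A @ [x]) = phi (A1 @ A2)"
    unfolding Ae using A1 A2 x y by (simp add: phi_append phi_single Wg.m_assoc s_carrier phi_closed)
  moreover have "set (A1 @ A2) \<subseteq> {0..n}" using A1 A2 by simp
  ultimately have "length (A @ [x]) \<le> length (A1 @ A2)" using m unfolding minw_def by metis
  then show False unfolding Ae by simp
qed

lemma Par_last: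
  assumes m: "minw (A @ [x])"
  shows "Par W s (A @ [x]) (s x)"
proof -
  have A: "set A \<subseteq> {0..n}" and x: "x \<le> n" using m by (auto simp: minw_def)
  have "Par W s (A @ [x]) (s x) = (Par W s [x] (s x) \<noteq> Par W s A (phi [x] \<otimes>\<^bsub>W\<^esub> s x \<otimes>\<^bsub>W\<^esub> inv\<^bsub>W\<^esub> (phi [x])))"
    using Par_append[OF A _ s_carrier[OF x]] x by simp
  moreover have "phi [x] \<otimes>\<^bsub>W\<^esub> s x \<otimes>\<^bsub>W\<^esub> inv\<^bsub>W\<^esub> (phi [x]) = s x"
    using x by (simp add: phi_single s_inv s_sq s_carrier)
  moreover have "Par W s [x] (s x)" using x by (simp add: s_carrier)
  ultimately show ?thesis using no_Par_prefix[OF m] by simp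
qed

lemma support:
  "minw ws \<Longrightarrow> I \<subseteq> {0..n} \<Longrightarrow> phi ws \<in> Wsub W s I \<Longrightarrow> set ws \<subseteq> I"
proof (induction ws rule: rev_induct)
  case Nil then show ?case by simp
next
  case (snoc x A)
  have A: "set A \<subseteq> {0..n}" and x: "x \<le> n" using snoc.prems by (auto simp: minw_def)
  obtain u where u: "set u \<subseteq> I" "phi u = phi (A @ [x])"
    using snoc.prems Wsub_eq by auto
  have un: "set u \<subseteq> {0..n}" using u snoc.prems by auto
  have "Par W s u (s x)"
    using Par_last[OF snoc.prems(1)] Par_indep[OF un _ u(2) s_carrier[OF x]] A x by simp
  then obtain A' y B where uAB: "u = A' @ y # B" and sx: "s x = inv\<^bsub>W\<^esub> (phi B) \<otimes>\<^bsub>W\<^esub> s y \<otimes>\<^bsub>W\<^esub> phi B"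
    using Par_refl un s_carrier[OF x] by blast
  have yI: "y \<in> I" and BI: "set B \<subseteq> I" using u uAB by auto
  have Bn: "set B \<subseteq> {0..n}" and yn: "y \<le> n" using BI yI snoc.prems(2) by auto
  have "s x = phi (rev B @ y # B)"
    unfolding sx using Bn yn
    by (subst phi_append) (auto simp: phi_rev Wg.m_assoc s_carrier phi_closed)
  moreover have "set (rev B @ y # B) \<subseteq> I" using yI BI by auto
  ultimately have "s x \<in> Wsub W s I" using Wsub_eq[OF snoc.prems(2)] by auto
  then have xI: "x \<in> I" using s_in_Wsub[OF x snoc.prems(2)] by simp
  have "phi A = phi (A @ [x]) \<otimes>\<^bsub>W\<^esub> s x"
    using A x by (simp add: phi_append phi_single Wg.m_assoc s_sq s_carrier phi_closed)
  also have "\<dots> = phi (u @ [x])" using u un x by (simp add: phi_append s_carrier)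
  finally have "phi A \<in> Wsub W s I" using Wsub_eq[OF snoc.prems(2)] u xI
    by (auto intro!: image_eqI[of _ _ "u @ [x]"])
  then have "set A \<subseteq> I" using snoc.IH minw_prefix[OF snoc.prems(1)] snoc.prems(2) by blast
  then show ?case using xI by simp
qed

lemma exists_minw: "w \<in> carrier W \<Longrightarrow> \<exists>ws. minw ws \<and> phi ws = w"
proof -
  assume "w \<in> carrier W"
  then obtain xs where "set xs \<subseteq> {0..n} \<and> phi xs = w" using surj_list by blast
  from ex_has_least_nat[of "\<lambda>v. set v \<subseteq> {0..n} \<and> phi v = w", OF this, of length]
  obtain ws where "set ws \<subseteq> {0..n} \<and> phi ws = w" "\<forall>v. set v \<subseteq> {0..n} \<and> phi v = w \<longrightarrow> length ws \<le> length v"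
    by blast
  then show ?thesis unfolding minw_def by blast
qed

lemma hat_sub: "hat n J \<subseteq> {0..n}" by (auto simp: hat_def)

lemma inter_Wsub:
  assumes J: "J \<subseteq> {0..n}" and w: "w \<in> carrier W" and h: "\<forall>i\<in>J. w \<in> Wsub W s (hat n {i})"
  shows "w \<in> Wsub W s (hat n J)"
proof -
  obtain ws where ws: "minw ws" "phi ws = w" using exists_minw[OF w] by blast
  have "set ws \<subseteq> hat n {i}" if "i \<in> J" for i
    using support[OF ws(1) hat_sub] h that ws(2) by blast
  then have "set ws \<subseteq> hat n J" using ws(1) unfolding minw_def hat_def by blast
  then show ?thesis using Wsub_eq[OF hat_sub] ws(2) by auto
qed

end


lemma (in group) rcos_eq_iff:
  assumes "subgroup A G" "x \<in> carrier G" "y \<in> carrier G"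
  shows "(A #> x = A #> y) = (x \<otimes> inv y \<in> A)"
proof
  assume "A #> x = A #> y"
  then have "x \<in> A #> y" using rcos_self assms by blast
  then show "x \<otimes> inv y \<in> A" using subgroup.rcos_module_imp[OF assms(1) is_group assms(3)] by blast
next
  assume "x \<otimes> inv y \<in> A"
  then have "x \<in> A #> y" using subgroup.rcos_module_rev[OF assms(1) is_group assms(3) assms(2)] by blast
  then show "A #> x = A #> y" using repr_independence[of x A y] assms by simp
qed

lemma (in group) rcos_sub_eq:
  assumes A: "subgroup A G" and B: "subgroup B G" and x: "x \<in> carrier G" and y: "y \<in> carrier G"
    and e: "A #> x = B #> y"
  shows "A = B"
proof -
  have "x \<in> B #> y" using e rcos_self[OF x A] by simp
  then have "B #> y = B #> x" using repr_independence[OF _ y B] by simp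
  then have "A #> x #> inv x = B #> x #> inv x" using e by simp
  then show ?thesis using A B x by (simp add: coset_mult_assoc subgroup.subset)
qed

definition fmap0 :: "('a, 'b) monoid_scheme \<Rightarrow> nat \<Rightarrow> (nat \<Rightarrow> 'a) \<Rightarrow> nat list set set \<Rightarrow> 'a set" where
  "fmap0 W n s Xa = (THE Y. \<exists>i g. i \<le> n \<and> g \<in> carrier (Gn2 n) \<and>
     Xa = orbit_class n (kernel (Gn2 n) W (phi_tilde W s)) {i} g \<and> Y = r_coset W (Wsub W s (hat n {i})) (phi_tilde W s g))"

context cox
begin

interpretation Wg: group W by (rule W_group)
interpretation Fg: group F by (rule F_group)
interpretation hg: group_hom F W phi by (rule ghom)

abbreviation "HH \<equiv> kernel F W phi"

lemma HH_sub: "HH \<subseteq> carrier F" by (auto simp: kernel_def)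

lemma oc_sub:
  assumes J: "J \<subseteq> {0..n}" and g: "g \<in> carrier F" and g': "g' \<in> carrier F"
    and r: "phi g \<otimes>\<^bsub>W\<^esub> inv\<^bsub>W\<^esub> (phi g') \<in> Wsub W s (hat n J)"
  shows "orbit_class n HH J g \<subseteq> orbit_class n HH J g'"
proof
  define K where "K = Ksub n (hat n J)"
  have K: "subgroup K F" unfolding K_def by (rule Ksub_subgroup[OF hat_sub])
  obtain k where k: "k \<in> K" "phi k = phi g \<otimes>\<^bsub>W\<^esub> inv\<^bsub>W\<^esub> (phi g')"
    using r phi_Ksub[OF hat_sub] K_def by (metis imageE)
  have kc: "k \<in> carrier F" using k K subgroup.subset by blast
  fix Xa assume "Xa \<in> orbit_class n HH J g"
  then obtain h where h: "h \<in> HH" "Xa = K #>\<^bsub>F\<^esub> (g \<otimes>\<^bsub>F\<^esub> h)" by (auto simp: orbit_class_def K_def)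
  have hc: "h \<in> carrier F" using h HH_sub by auto
  define h' where "h' = inv\<^bsub>F\<^esub> g' \<otimes>\<^bsub>F\<^esub> (inv\<^bsub>F\<^esub> k \<otimes>\<^bsub>F\<^esub> (g \<otimes>\<^bsub>F\<^esub> h))"
  have h'c: "h' \<in> carrier F" using g g' kc hc by (simp add: h'_def)
  have "phi h' = inv\<^bsub>W\<^esub> (phi g') \<otimes>\<^bsub>W\<^esub> (inv\<^bsub>W\<^esub> (phi g \<otimes>\<^bsub>W\<^esub> inv\<^bsub>W\<^esub> (phi g')) \<otimes>\<^bsub>W\<^esub> phi g)"
    using g g' kc hc h k by (simp add: h'_def kernel_def)
  also have "\<dots> = \<one>\<^bsub>W\<^esub>" using g g' by (simp add: Wg.inv_mult_group Wg.m_assoc)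
  finally have h'H: "h' \<in> HH" using h'c by (simp add: kernel_def)
  have "g' \<otimes>\<^bsub>F\<^esub> h' = inv\<^bsub>F\<^esub> k \<otimes>\<^bsub>F\<^esub> (g \<otimes>\<^bsub>F\<^esub> h)"
    using g g' kc hc by (simp add: h'_def Fg.m_assoc[symmetric])
  then have "K #>\<^bsub>F\<^esub> (g' \<otimes>\<^bsub>F\<^esub> h') = (K #>\<^bsub>F\<^esub> inv\<^bsub>F\<^esub> k) #>\<^bsub>F\<^esub> (g \<otimes>\<^bsub>F\<^esub> h)"
    using K g kc hc by (simp add: Fg.coset_mult_assoc subgroup.subset)
  also have "K #>\<^bsub>F\<^esub> inv\<^bsub>F\<^esub> k = K" using K k kc by (simp add: Fg.coset_join2 subgroup.m_inv_closed)
  finally have "Xa = K #>\<^bsub>F\<^esub> (g' \<otimes>\<^bsub>F\<^esub> h')" using h by simp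
  then show "Xa \<in> orbit_class n HH J g'" using h'H by (auto simp: orbit_class_def K_def)
qed

lemma oc_eq:
  assumes J: "J \<subseteq> {0..n}" and g: "g \<in> carrier F" and g': "g' \<in> carrier F"
  shows "(orbit_class n HH J g = orbit_class n HH J g') = (phi g \<otimes>\<^bsub>W\<^esub> inv\<^bsub>W\<^esub> (phi g') \<in> Wsub W s (hat n J))"
proof
  define K where "K = Ksub n (hat n J)"
  have K: "subgroup K F" unfolding K_def by (rule Ksub_subgroup[OF hat_sub])
  assume e: "orbit_class n HH J g = orbit_class n HH J g'"
  have "K #>\<^bsub>F\<^esub> (g \<otimes>\<^bsub>F\<^esub> \<one>\<^bsub>F\<^esub>) \<in> orbit_class n HH J g"
    unfolding orbit_class_def K_def using hg.subgroup_kernel subgroup.one_closed by blast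
  then obtain h where h: "h \<in> HH" "K #>\<^bsub>F\<^esub> g = K #>\<^bsub>F\<^esub> (g' \<otimes>\<^bsub>F\<^esub> h)"
    using e g unfolding orbit_class_def K_def by auto
  have hc: "h \<in> carrier F" using h HH_sub by auto
  have "g \<otimes>\<^bsub>F\<^esub> inv\<^bsub>F\<^esub> (g' \<otimes>\<^bsub>F\<^esub> h) \<in> K" using Fg.rcos_eq_iff[OF K] h g g' hc by simp
  then have "phi (g \<otimes>\<^bsub>F\<^esub> inv\<^bsub>F\<^esub> (g' \<otimes>\<^bsub>F\<^esub> h)) \<in> Wsub W s (hat n J)"
    using phi_Ksub[OF hat_sub] K_def by blast
  moreover have "phi (g \<otimes>\<^bsub>F\<^esub> inv\<^bsub>F\<^esub> (g' \<otimes>\<^bsub>F\<^esub> h)) = phi g \<otimes>\<^bsub>W\<^esub> inv\<^bsub>W\<^esub> (phi g')"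
    using g g' hc h by (simp add: kernel_def)
  ultimately show "phi g \<otimes>\<^bsub>W\<^esub> inv\<^bsub>W\<^esub> (phi g') \<in> Wsub W s (hat n J)" by simp
next
  assume r: "phi g \<otimes>\<^bsub>W\<^esub> inv\<^bsub>W\<^esub> (phi g') \<in> Wsub W s (hat n J)"
  have S: "subgroup (Wsub W s (hat n J)) W" by (rule Wsub_subgroup[OF hat_sub])
  have "inv\<^bsub>W\<^esub> (phi g \<otimes>\<^bsub>W\<^esub> inv\<^bsub>W\<^esub> (phi g')) \<in> Wsub W s (hat n J)"
    using subgroup.m_inv_closed[OF S r] .
  moreover have "inv\<^bsub>W\<^esub> (phi g \<otimes>\<^bsub>W\<^esub> inv\<^bsub>W\<^esub> (phi g')) = phi g' \<otimes>\<^bsub>W\<^esub> inv\<^bsub>W\<^esub> (phi g)"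
    using g g' by (simp add: Wg.inv_mult_group)
  ultimately have r': "phi g' \<otimes>\<^bsub>W\<^esub> inv\<^bsub>W\<^esub> (phi g) \<in> Wsub W s (hat n J)" by simp
  show "orbit_class n HH J g = orbit_class n HH J g'"
    using oc_sub[OF J g g' r] oc_sub[OF J g' g r'] by blast
qed

lemma Wsub_hat_inj:
  assumes i: "i \<le> n" and i': "i' \<le> n" and e: "Wsub W s (hat n {i}) = Wsub W s (hat n {i'})"
  shows "i = i'"
proof (rule ccontr)
  assume ne: "i \<noteq> i'"
  then have "i \<in> hat n {i'}" using i by (simp add: hat_def)
  then have "s i \<in> Wsub W s (hat n {i'})" unfolding Wsub_def by (auto intro: generate.incl)
  then have "s i \<in> Wsub W s (hat n {i})" using e by simp
  then have "i \<in> hat n {i}" using s_in_Wsub[OF i hat_sub] by simp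
  then show False by (simp add: hat_def)
qed

lemma oc_i_eq:
  assumes i: "i \<le> n" and i': "i' \<le> n" and g: "g \<in> carrier F" and g': "g' \<in> carrier F"
    and e: "orbit_class n HH {i} g = orbit_class n HH {i'} g'"
  shows "i = i'"
proof -
  have "Ksub n (hat n {i}) #>\<^bsub>F\<^esub> (g \<otimes>\<^bsub>F\<^esub> \<one>\<^bsub>F\<^esub>) \<in> orbit_class n HH {i} g"
    unfolding orbit_class_def using hg.subgroup_kernel subgroup.one_closed by blast
  then obtain h where h: "h \<in> HH" "Ksub n (hat n {i}) #>\<^bsub>F\<^esub> g = Ksub n (hat n {i'}) #>\<^bsub>F\<^esub> (g' \<otimes>\<^bsub>F\<^esub> h)"
    using e g unfolding orbit_class_def by auto
  have hc: "h \<in> carrier F" using h HH_sub by auto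
  have "Ksub n (hat n {i}) = Ksub n (hat n {i'})"
    using Fg.rcos_sub_eq[OF Ksub_subgroup[OF hat_sub] Ksub_subgroup[OF hat_sub] g _ h(2)] g' hc by simp
  then have "Wsub W s (hat n {i}) = Wsub W s (hat n {i'})" using phi_Ksub[OF hat_sub] by metis
  then show ?thesis using Wsub_hat_inj i i' by blast
qed

lemma cells_char:
  "\<sigma> \<in> multicomplex_cells n HH \<longleftrightarrow>
   (\<exists>J g. J \<subseteq> {0..n} \<and> g \<in> carrier F \<and> \<sigma> = (\<lambda>i. orbit_class n HH {i} g) ` J)"
proof
  assume "\<sigma> \<in> multicomplex_cells n HH"
  then obtain M where M: "M \<in> multicells n HH" "lies_over n HH M \<sigma>" by (auto simp: multicomplex_cells_def)
  from M(1) obtain J0 g0 where J0: "M = (J0, orbit_class n HH J0 g0)" "J0 \<subseteq> {0..n}"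
    unfolding multicells_def by blast
  from M(2) obtain g where g: "g \<in> carrier F" "\<sigma> = (\<lambda>i. orbit_class n HH {i} g) ` fst M"
    unfolding lies_over_def by blast
  show "\<exists>J g. J \<subseteq> {0..n} \<and> g \<in> carrier F \<and> \<sigma> = (\<lambda>i. orbit_class n HH {i} g) ` J"
    using J0 g by (intro exI[of _ J0] exI[of _ g]) simp
next
  assume "\<exists>J g. J \<subseteq> {0..n} \<and> g \<in> carrier F \<and> \<sigma> = (\<lambda>i. orbit_class n HH {i} g) ` J"
  then obtain J g where Jg: "J \<subseteq> {0..n}" "g \<in> carrier F" "\<sigma> = (\<lambda>i. orbit_class n HH {i} g) ` J" by blast
  have "(J, orbit_class n HH J g) \<in> multicells n HH" using Jg by (auto simp: multicells_def)
  moreover have "lies_over n HH (J, orbit_class n HH J g) \<sigma>" using Jg by (auto simp: lies_over_def)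
  ultimately show "\<sigma> \<in> multicomplex_cells n HH" by (auto simp: multicomplex_cells_def)
qed

lemma mult_one:
  assumes "\<sigma> \<in> multicomplex_cells n HH"
  shows "multiplicity n HH \<sigma> = 1"
proof -
  obtain J g where J: "J \<subseteq> {0..n}" and g: "g \<in> carrier F" and \<sigma>: "\<sigma> = (\<lambda>i. orbit_class n HH {i} g) ` J"
    using cells_char[THEN iffD1, OF assms] by blast
  have uniq: "M = (J, orbit_class n HH J g)" if M: "M \<in> multicells n HH" "lies_over n HH M \<sigma>" for M
  proof -
    obtain J' Xa where MJ: "M = (J', Xa)" by (cases M)
    from M MJ have J': "J' \<subseteq> {0..n}" by (auto simp: multicells_def)
    obtain g' where g': "g' \<in> carrier F" "Xa = orbit_class n HH J' g'"
      "\<sigma> = (\<lambda>i. orbit_class n HH {i} g') ` J'" using M(2) MJ by (auto simp: lies_over_def)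
    have img: "(\<lambda>i. orbit_class n HH {i} g) ` J = (\<lambda>i. orbit_class n HH {i} g') ` J'" using \<sigma> g' by simp
    have JJ: "J' = J"
    proof
      show "J \<subseteq> J'"
      proof
        fix i assume i: "i \<in> J"
        then obtain i' where i': "i' \<in> J'" "orbit_class n HH {i} g = orbit_class n HH {i'} g'" using img by blast
        have "i \<le> n" "i' \<le> n" using i i' J J' by auto
        then have "i = i'" using oc_i_eq[OF _ _ g g'(1) i'(2)] by blast
        then show "i \<in> J'" using i' by simp
      qed
      show "J' \<subseteq> J"
      proof
        fix i assume i: "i \<in> J'"
        then obtain i' where i': "i' \<in> J" "orbit_class n HH {i} g' = orbit_class n HH {i'} g" using img by blast
        have "i \<le> n" "i' \<le> n" using i i' J J' by auto
        then have "i = i'" using oc_i_eq[OF _ _ g'(1) g i'(2)] by blast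
        then show "i \<in> J" using i' by simp
      qed
    qed
    have "\<forall>i\<in>J. phi g \<otimes>\<^bsub>W\<^esub> inv\<^bsub>W\<^esub> (phi g') \<in> Wsub W s (hat n {i})"
    proof
      fix i assume i: "i \<in> J"
      then obtain i' where i': "i' \<in> J'" "orbit_class n HH {i} g = orbit_class n HH {i'} g'" using img by blast
      have "i \<le> n" "i' \<le> n" using i i' J J' by auto
      then have "i = i'" using oc_i_eq[OF _ _ g g'(1) i'(2)] by blast
      with i' have "orbit_class n HH {i} g = orbit_class n HH {i} g'" by simp
      then show "phi g \<otimes>\<^bsub>W\<^esub> inv\<^bsub>W\<^esub> (phi g') \<in> Wsub W s (hat n {i})"
        using oc_eq[of "{i}" g g'] i J g g'(1) by auto
    qed
    then have "phi g \<otimes>\<^bsub>W\<^esub> inv\<^bsub>W\<^esub> (phi g') \<in> Wsub W s (hat n J)"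
      using inter_Wsub[OF J] g g'(1) by simp
    then have "orbit_class n HH J g = orbit_class n HH J g'" using oc_eq[OF J g g'(1)] by simp
    then show ?thesis using JJ g' MJ by simp
  qed
  have "(J, orbit_class n HH J g) \<in> multicells n HH" using J g by (auto simp: multicells_def)
  moreover have "lies_over n HH (J, orbit_class n HH J g) \<sigma>" using J g \<sigma> by (auto simp: lies_over_def)
  ultimately have "{M \<in> multicells n HH. lies_over n HH M \<sigma>} = {(J, orbit_class n HH J g)}"
    using uniq by blast
  then show ?thesis by (simp add: multiplicity_def)
qed

abbreviation "fmap \<equiv> fmap0 W n s"

lemma Wcos_eq: "i \<le> n \<Longrightarrow> g \<in> carrier F \<Longrightarrow> g' \<in> carrier F \<Longrightarrow>
  (Wsub W s (hat n {i}) #>\<^bsub>W\<^esub> phi g = Wsub W s (hat n {i}) #>\<^bsub>W\<^esub> phi g') = (orbit_class n HH {i} g = orbit_class n HH {i} g')"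
  using Wg.rcos_eq_iff[OF Wsub_subgroup[OF hat_sub]] oc_eq[of "{i}"] by simp

lemma fmap_eq:
  assumes i: "i \<le> n" and g: "g \<in> carrier F"
  shows "fmap (orbit_class n HH {i} g) = Wsub W s (hat n {i}) #>\<^bsub>W\<^esub> phi g"
  unfolding fmap0_def
proof (rule the_equality)
  show "\<exists>i' g'. i' \<le> n \<and> g' \<in> carrier F \<and> orbit_class n HH {i} g = orbit_class n HH {i'} g' \<and>
      Wsub W s (hat n {i}) #>\<^bsub>W\<^esub> phi g = Wsub W s (hat n {i'}) #>\<^bsub>W\<^esub> phi g'" using i g by blast
  fix Y assume "\<exists>i' g'. i' \<le> n \<and> g' \<in> carrier F \<and> orbit_class n HH {i} g = orbit_class n HH {i'} g' \<and>
      Y = Wsub W s (hat n {i'}) #>\<^bsub>W\<^esub> phi g'"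
  then obtain i' g' where h: "i' \<le> n" "g' \<in> carrier F" "orbit_class n HH {i} g = orbit_class n HH {i'} g'"
    "Y = Wsub W s (hat n {i'}) #>\<^bsub>W\<^esub> phi g'" by blast
  then have "i = i'" using oc_i_eq i g by blast
  then show "Y = Wsub W s (hat n {i}) #>\<^bsub>W\<^esub> phi g" using h Wcos_eq i g by simp
qed

lemma union_C: "\<Union> (multicomplex_cells n HH) = {orbit_class n HH {i} g | i g. i \<le> n \<and> g \<in> carrier F}"
proof safe
  fix Xa \<sigma> assume X: "Xa \<in> \<sigma>" and sC: "\<sigma> \<in> multicomplex_cells n HH"
  obtain J g where J: "J \<subseteq> {0..n}" "g \<in> carrier F" "\<sigma> = (\<lambda>i. orbit_class n HH {i} g) ` J"
    using cells_char[THEN iffD1, OF sC] by blast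
  then obtain i where i: "i \<in> J" "Xa = orbit_class n HH {i} g" using X by blast
  show "\<exists>i g. Xa = orbit_class n HH {i} g \<and> i \<le> n \<and> g \<in> carrier F"
    using i J(1,2) by (intro exI[of _ i] exI[of _ g]) auto
next
  fix i g assume "i \<le> n" "g \<in> carrier F"
  then have "{orbit_class n HH {i} g} \<in> multicomplex_cells n HH"
    by (intro cells_char[THEN iffD2] exI[of _ "{i}"] exI[of _ g]) auto
  then show "orbit_class n HH {i} g \<in> \<Union> (multicomplex_cells n HH)" by blast
qed

lemma union_D: "\<Union> (coxeter_complex W n s) = {Wsub W s (hat n {i}) #>\<^bsub>W\<^esub> w | i w. i \<le> n \<and> w \<in> carrier W}"
proof safe
  fix Xa \<sigma> assume X: "Xa \<in> \<sigma>" and "\<sigma> \<in> coxeter_complex W n s"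
  then obtain J w where Jw: "J \<subseteq> {0..n}" "w \<in> carrier W" "\<sigma> = (\<lambda>i. Wsub W s (hat n {i}) #>\<^bsub>W\<^esub> w) ` J"
    unfolding coxeter_complex_def by blast
  then obtain i where i: "i \<in> J" "Xa = Wsub W s (hat n {i}) #>\<^bsub>W\<^esub> w" using X by blast
  show "\<exists>i w. Xa = Wsub W s (hat n {i}) #>\<^bsub>W\<^esub> w \<and> i \<le> n \<and> w \<in> carrier W"
    using i Jw by (intro exI[of _ i] exI[of _ w]) auto
next
  fix i w assume "i \<le> n" "w \<in> carrier W"
  then have "{Wsub W s (hat n {i}) #>\<^bsub>W\<^esub> w} \<in> coxeter_complex W n s"
    unfolding coxeter_complex_def by (intro CollectI exI[of _ "{i}"] exI[of _ w]) auto
  then show "Wsub W s (hat n {i}) #>\<^bsub>W\<^esub> w \<in> \<Union> (coxeter_complex W n s)" by blast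
qed

lemma fmap_inj: "inj_on fmap (\<Union> (multicomplex_cells n HH))"
proof (rule inj_onI)
  fix Xa Y assume Xa: "Xa \<in> \<Union> (multicomplex_cells n HH)" and Y: "Y \<in> \<Union> (multicomplex_cells n HH)"
    and e: "fmap Xa = fmap Y"
  obtain i g where ig: "i \<le> n" "g \<in> carrier F" "Xa = orbit_class n HH {i} g" using Xa union_C by auto
  obtain i' g' where ig': "i' \<le> n" "g' \<in> carrier F" "Y = orbit_class n HH {i'} g'" using Y union_C by auto
  have e2: "Wsub W s (hat n {i}) #>\<^bsub>W\<^esub> phi g = Wsub W s (hat n {i'}) #>\<^bsub>W\<^esub> phi g'"
    using e ig ig' fmap_eq by simp
  have "Wsub W s (hat n {i}) = Wsub W s (hat n {i'})"
    by (rule Wg.rcos_sub_eq[OF Wsub_subgroup[OF hat_sub] Wsub_subgroup[OF hat_sub] hg.hom_closed[OF ig(2)] hg.hom_closed[OF ig'(2)] e2])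
  then have "i = i'" using Wsub_hat_inj ig ig' by blast
  then show "Xa = Y" using e2 Wcos_eq ig ig' by simp
qed

lemma fmap_img: "fmap ` (\<Union> (multicomplex_cells n HH)) = \<Union> (coxeter_complex W n s)"
proof -
  have "fmap ` {orbit_class n HH {i} g | i g. i \<le> n \<and> g \<in> carrier F} =
        {Wsub W s (hat n {i}) #>\<^bsub>W\<^esub> w | i w. i \<le> n \<and> w \<in> carrier W}"
  proof safe
    fix i g assume ig: "i \<le> n" "g \<in> carrier F"
    show "\<exists>i' w. fmap (orbit_class n HH {i} g) = Wsub W s (hat n {i'}) #>\<^bsub>W\<^esub> w \<and> i' \<le> n \<and> w \<in> carrier W"
      using ig by (intro exI[of _ i] exI[of _ "phi g"]) (simp add: fmap_eq)
  next
    fix i w assume i: "i \<le> n" and w: "w \<in> carrier W"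
    then have "w \<in> phi ` carrier F" using phi_surj by simp
    then obtain g where g: "g \<in> carrier F" "phi g = w" by blast
    then show "Wsub W s (hat n {i}) #>\<^bsub>W\<^esub> w \<in> fmap ` {orbit_class n HH {i} g | i g. i \<le> n \<and> g \<in> carrier F}"
      using fmap_eq[OF i g(1)] i by (intro image_eqI[of _ _ "orbit_class n HH {i} g"]) auto
  qed
  then show ?thesis using union_C union_D by simp
qed

lemma iso: "complex_iso (multicomplex_cells n HH) (coxeter_complex W n s)"
  unfolding complex_iso_def
proof (intro exI[of _ fmap] conjI allI impI)
  show "bij_betw fmap (\<Union> (multicomplex_cells n HH)) (\<Union> (coxeter_complex W n s))"
    using fmap_inj fmap_img by (simp add: bij_betw_def)
  fix \<sigma> assume sub: "\<sigma> \<subseteq> \<Union> (multicomplex_cells n HH)"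
  show "(\<sigma> \<in> multicomplex_cells n HH) = (fmap ` \<sigma> \<in> coxeter_complex W n s)"
  proof
    assume sC: "\<sigma> \<in> multicomplex_cells n HH"
    obtain J g where J: "J \<subseteq> {0..n}" "g \<in> carrier F" "\<sigma> = (\<lambda>i. orbit_class n HH {i} g) ` J"
      using cells_char[THEN iffD1, OF sC] by blast
    have "fmap ` \<sigma> = (\<lambda>i. fmap (orbit_class n HH {i} g)) ` J" using J(3) by (simp add: image_image)
    also have "\<dots> = (\<lambda>i. Wsub W s (hat n {i}) #>\<^bsub>W\<^esub> phi g) ` J"
      using J(1,2) fmap_eq by (intro image_cong) auto
    finally have "fmap ` \<sigma> = (\<lambda>i. Wsub W s (hat n {i}) #>\<^bsub>W\<^esub> phi g) ` J" .
    moreover have "phi g \<in> carrier W" using J(2) by simp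
    ultimately show "fmap ` \<sigma> \<in> coxeter_complex W n s" using J(1) unfolding coxeter_complex_def by blast
  next
    assume "fmap ` \<sigma> \<in> coxeter_complex W n s"
    then obtain J w where J: "J \<subseteq> {0..n}" "w \<in> carrier W" "fmap ` \<sigma> = (\<lambda>i. Wsub W s (hat n {i}) #>\<^bsub>W\<^esub> w) ` J"
      unfolding coxeter_complex_def by blast
    have "w \<in> phi ` carrier F" using phi_surj J(2) by simp
    then obtain g where g: "g \<in> carrier F" "phi g = w" by blast
    define \<sigma>' where "\<sigma>' = (\<lambda>i. orbit_class n HH {i} g) ` J"
    have \<sigma>'C: "\<sigma>' \<in> multicomplex_cells n HH" unfolding \<sigma>'_def
      using J g by (intro cells_char[THEN iffD2] exI[of _ J] exI[of _ g]) simp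
    then have sub': "\<sigma>' \<subseteq> \<Union> (multicomplex_cells n HH)" by blast
    have "fmap ` \<sigma>' = (\<lambda>i. fmap (orbit_class n HH {i} g)) ` J" unfolding \<sigma>'_def by (simp add: image_image)
    also have "\<dots> = (\<lambda>i. Wsub W s (hat n {i}) #>\<^bsub>W\<^esub> w) ` J"
      using J(1) g fmap_eq by (intro image_cong) auto
    finally have "fmap ` \<sigma>' = fmap ` \<sigma>" using J(3) by simp
    then have "\<sigma>' = \<sigma>" using inj_on_image_eq_iff[OF fmap_inj sub' sub] by simp
    then show "\<sigma> \<in> multicomplex_cells n HH" using \<sigma>'C by simp
  qed
qed

end

theorem proposition10:
  fixes W :: "('a, 'b) monoid_scheme" and n :: nat and s :: "nat \<Rightarrow> 'a"
    and m :: "nat \<Rightarrow> nat \<Rightarrow> enat"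
  assumes "coxeter_system W n s m"
  defines "H \<equiv> kernel (Gn2 n) W (phi_tilde W s)"
  shows "(\<forall>\<sigma> \<in> multicomplex_cells n H. multiplicity n H \<sigma> = 1)
         \<and> complex_iso (multicomplex_cells n H) (coxeter_complex W n s)"
proof -
  interpret cox W n s m by (rule cox.intro[OF assms(1)])
  show ?thesis unfolding H_def using mult_one iso by blast
qed


end
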